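(* \textsc{IN3DM} reduces to \textsc{Position Matching} in polynomial time.
   Context: \textsc{IN3DM}: given a multiset of positive integers $A=\{a_1,\dots,a_n\}$, the set $B=\{1,\dots,n\}$ and a multiset of positive integers $T=\{t_1,\dots,t_n\}$, decide whether there is $M\subseteq A\times B\times T$ in which every element of $A$, $B$, $T$ occurs exactly once and every triple $(a,b,t)\in M$ satisfies $a+b\ge t$. The discretized sequence $\langle a_1,\dots,a_n\rangle$ of a non-decreasing sequence $\langle d_1,\dots,d_n\rangle$ is given by $a_n=d_n$, $a_i=\min\{a_{i+1}-1,d_i\}$ for $i<n$. \textsc{Position Matching}: given a non-decreasing sequence $D=\langle d_1,\dots,d_n\rangle$ of positive integers, its discretized sequence $A=\langle a_1,\dots,a_n\rangle$, and a set $T$ of $n$ distinct positive integers, decide whether there is $M\subseteq D\times A\times T$ in which every element of $D$, $A$, $T$ occurs exactly once and every triple $(d,a,t)\in M$ satisfies $d\ge a$ and $d+a\ge t$. *)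

theory Defs
  imports Main "HOL-Library.Multiset"
begin

text \<open>IN3DM instance: lists a = (a_1..a_n), t = (t_1..t_n) of positive integers
 (the multisets A and T); B = {1..n}.\<close>

definition in3dm_inst :: "nat list \<Rightarrow> nat list \<Rightarrow> bool" where
  "in3dm_inst a t \<longleftrightarrow> length a = length t \<and> (\<forall>x\<in>set a. 0 < x) \<and> (\<forall>x\<in>set t. 0 < x)"

definition in3dm :: "nat list \<Rightarrow> nat list \<Rightarrow> bool" where
  "in3dm a t \<longleftrightarrow> (\<exists>M :: (nat \<times> nat \<times> nat) multiset.
      image_mset fst M = mset a \<and>
      image_mset (fst \<circ> snd) M = mset [1..<Suc (length a)] \<and>
      image_mset (snd \<circ> snd) M = mset t \<and>
      (\<forall>(x, y, z) \<in># M. z \<le> x + y))"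

text \<open>Discretized sequence: a_n = d_n, a_i = min (a_(i+1) - 1) d_i (values may be \<le> 0).\<close>

definition discretize :: "int list \<Rightarrow> int list" where
  "discretize ds = foldr (\<lambda>d acc. case acc of [] \<Rightarrow> [d] | x # _ \<Rightarrow> min (x - 1) d # acc) ds []"

definition pm_inst :: "nat list \<Rightarrow> nat list \<Rightarrow> bool" where
  "pm_inst D T \<longleftrightarrow> length D = length T \<and> sorted D \<and> (\<forall>d\<in>set D. 0 < d) \<and>
      distinct T \<and> (\<forall>x\<in>set T. 0 < x)"

definition pos_match :: "nat list \<Rightarrow> nat list \<Rightarrow> bool" where
  "pos_match D T \<longleftrightarrow> (\<exists>M :: (int \<times> int \<times> int) multiset.
      image_mset fst M = mset (map int D) \<and>
      image_mset (fst \<circ> snd) M = mset (discretize (map int D)) \<and>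
      image_mset (snd \<circ> snd) M = mset (map int T) \<and>
      (\<forall>(d, x, y) \<in># M. x \<le> d \<and> y \<le> d + x))"

text \<open>Without multiplication this model is polynomially equivalent
 to Turing machines.\<close>

datatype aexp = N nat | Mem aexp | Plus aexp aexp | Minus aexp aexp

primrec aval :: "aexp \<Rightarrow> (nat \<Rightarrow> nat) \<Rightarrow> nat" where
  "aval (N c) m = c"
| "aval (Mem e) m = m (aval e m)"
| "aval (Plus e1 e2) m = aval e1 m + aval e2 m"
| "aval (Minus e1 e2) m = aval e1 m - aval e2 m"

datatype com = SKIP | Assign aexp aexp | Seq com com | If aexp com com | While aexp com

inductive big_step :: "com \<Rightarrow> (nat \<Rightarrow> nat) \<Rightarrow> nat \<Rightarrow> (nat \<Rightarrow> nat) \<Rightarrow> bool" where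
  Skip: "big_step SKIP m 1 m"
| Assign: "big_step (Assign a e) m 1 (m(aval a m := aval e m))"
| Seq: "big_step c1 m k1 m1 \<Longrightarrow> big_step c2 m1 k2 m2 \<Longrightarrow> big_step (Seq c1 c2) m (k1 + k2) m2"
| IfT: "aval b m \<noteq> 0 \<Longrightarrow> big_step c1 m k m' \<Longrightarrow> big_step (If b c1 c2) m (Suc k) m'"
| IfF: "aval b m = 0 \<Longrightarrow> big_step c2 m k m' \<Longrightarrow> big_step (If b c1 c2) m (Suc k) m'"
| WhileF: "aval b m = 0 \<Longrightarrow> big_step (While b c) m 1 m"
| WhileT: "aval b m \<noteq> 0 \<Longrightarrow> big_step c m k1 m1 \<Longrightarrow> big_step (While b c) m1 k2 m2 \<Longrightarrow>
     big_step (While b c) m (Suc (k1 + k2)) m2"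

definition enc_in :: "nat list \<Rightarrow> nat list \<Rightarrow> nat \<Rightarrow> nat" where
  "enc_in a t = (\<lambda>j. if j = 0 then length a
                     else if j \<le> length a then a ! (j - 1)
                     else if j \<le> 2 * length a then t ! (j - 1 - length a)
                     else 0)"

definition out_D :: "(nat \<Rightarrow> nat) \<Rightarrow> nat list" where
  "out_D m = map (\<lambda>i. m (Suc i)) [0..<m 0]"

definition out_T :: "(nat \<Rightarrow> nat) \<Rightarrow> nat list" where
  "out_T m = map (\<lambda>i. m (Suc (m 0 + i))) [0..<m 0]"

fun bitlen :: "nat \<Rightarrow> nat" where
  "bitlen n = (if n = 0 then 0 else Suc (bitlen (n div 2)))"

definition in3dm_size :: "nat list \<Rightarrow> nat list \<Rightarrow> nat" where
  "in3dm_size a t = length a + sum_list (map bitlen a) + sum_list (map bitlen t)"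

end

theory Submission
  imports Defs "HOL-Combinatorics.List_Permutation"
begin

locale inst =
  fixes a t :: "nat list"
  assumes len: "length t = length a"
begin

abbreviation n where "n \<equiv> length a"

definition w where "w = a @ t"

definition lexless where "lexless l k \<longleftrightarrow> w!l < w!k \<or> (w!l = w!k \<and> l < k)"

definition rank where "rank k = length (filter (\<lambda>l. lexless l k) [0..<2*n])"

lemma length_w: "length w = 2*n" using len by (simp add: w_def)

lemma rank_card: "rank k = card {l. l < 2*n \<and> lexless l k}"
proof -
  have "rank k = card (set (filter (\<lambda>l. lexless l k) [0..<2*n]))"
    unfolding rank_def by (rule distinct_card[symmetric]) simp
  also have "set (filter (\<lambda>l. lexless l k) [0..<2*n]) = {l. l < 2*n \<and> lexless l k}" by auto
  finally show ?thesis .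
qed

lemma lexless_trans: "lexless x y \<Longrightarrow> lexless y z \<Longrightarrow> lexless x z"
  unfolding lexless_def by auto

lemma lexless_irrefl: "\<not> lexless x x" unfolding lexless_def by auto

lemma lexless_total: "x \<noteq> y \<Longrightarrow> lexless x y \<or> lexless y x"
  unfolding lexless_def by auto

lemma rank_lt: assumes "k < 2*n" shows "rank k < 2*n"
proof -
  have "{l. l < 2*n \<and> lexless l k} \<subseteq> {..<2*n} - {k}" using lexless_irrefl by auto
  hence "card {l. l < 2*n \<and> lexless l k} \<le> card ({..<2*n} - {k})" by (intro card_mono) auto
  also have "\<dots> < 2*n" using assms by simp
  finally show ?thesis by (simp add: rank_card)
qed

lemma rank_mono: assumes "lexless k1 k2" "k1 < 2*n" shows "rank k1 < rank k2"
proof -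
  have "{l. l < 2*n \<and> lexless l k1} \<subset> {l. l < 2*n \<and> lexless l k2}"
    using assms lexless_trans lexless_irrefl by blast
  thus ?thesis unfolding rank_card by (intro psubset_card_mono) auto
qed

lemma rank_inj: "inj_on rank {..<2*n}"
proof (rule inj_onI)
  fix x y assume "x \<in> {..<2*n}" "y \<in> {..<2*n}" "rank x = rank y"
  thus "x = y" using rank_mono lexless_total by (metis lessThan_iff less_irrefl)
qed

lemma rank_bij: "bij_betw rank {..<2*n} {..<2*n}"
proof -
  have "rank ` {..<2*n} \<subseteq> {..<2*n}" using rank_lt by auto
  moreover have "card (rank ` {..<2*n}) = card {..<2*n::nat}" using rank_inj by (simp add: card_image)
  ultimately have "rank ` {..<2*n} = {..<2*n}" by (intro card_subset_eq) auto
  thus ?thesis using rank_inj by (simp add: bij_betw_def)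
qed

definition perm where "perm r = inv_into {..<2*n} rank r"

lemma perm_lt: "r < 2*n \<Longrightarrow> perm r < 2*n"
  unfolding perm_def using rank_bij by (metis bij_betw_def bij_betw_inv_into lessThan_iff bij_betwE)

lemma rank_perm: "r < 2*n \<Longrightarrow> rank (perm r) = r"
  unfolding perm_def using rank_bij by (simp add: bij_betw_inv_into_right)

lemma perm_rank: "k < 2*n \<Longrightarrow> perm (rank k) = k"
  unfolding perm_def using rank_bij by (simp add: bij_betw_inv_into_left)

definition ws where "ws r = w ! perm r"

lemma ws_mono: assumes "r1 \<le> r2" "r2 < 2*n" shows "ws r1 \<le> ws r2"
proof (rule ccontr)
  assume "\<not> ws r1 \<le> ws r2"
  hence "lexless (perm r2) (perm r1)" unfolding ws_def lexless_def by auto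
  hence "rank (perm r2) < rank (perm r1)" using rank_mono perm_lt assms by auto
  thus False using assms rank_perm by auto
qed

lemma ws_rank: "k < 2*n \<Longrightarrow> ws (rank k) = w ! k"
  unfolding ws_def by (simp add: perm_rank)

definition K where "K = Suc n"

lemma K_pos: "0 < K" by (simp add: K_def)

definition gap where "gap i = ws (Suc i) - ws i"

definition kcc where "kcc r = (\<Sum>i<r. K * min (gap i) K)"

lemma kcc_Suc: "kcc (Suc r) = kcc r + K * min (gap r) K"
  unfolding kcc_def by simp

lemma ws_tele: assumes "r1 \<le> r2" "r2 < 2*n" shows "ws r2 = ws r1 + (\<Sum>i\<in>{r1..<r2}. gap i)"
  using assms
proof (induction r2)
  case 0 thus ?case by simp
next
  case (Suc r)
  show ?case
  proof (cases "r1 = Suc r")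
    case True thus ?thesis by simp
  next
    case False
    hence "r1 \<le> r" using Suc by simp
    hence ih: "ws r = ws r1 + (\<Sum>i\<in>{r1..<r}. gap i)" using Suc by simp
    have "ws r \<le> ws (Suc r)" using ws_mono Suc by simp
    thus ?thesis using ih \<open>r1 \<le> r\<close> by (simp add: gap_def)
  qed
qed

lemma kcc_split: assumes "r1 \<le> r2" shows "kcc r2 = kcc r1 + K * (\<Sum>i\<in>{r1..<r2}. min (gap i) K)"
proof -
  have "{..<r2} = {..<r1} \<union> {r1..<r2}" using assms by auto
  hence "kcc r2 = (\<Sum>i\<in>{..<r1} \<union> {r1..<r2}. K * min (gap i) K)"
    unfolding kcc_def by simp
  also have "\<dots> = kcc r1 + (\<Sum>i\<in>{r1..<r2}. K * min (gap i) K)"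
    unfolding kcc_def by (rule sum.union_disjoint) auto
  finally have "kcc r2 = kcc r1 + (\<Sum>i\<in>{r1..<r2}. K * min (gap i) K)" .
  thus ?thesis by (simp add: sum_distrib_left)
qed

lemma kcc_mono: "r1 \<le> r2 \<Longrightarrow> kcc r1 \<le> kcc r2"
  using kcc_split by fastforce

lemma compress: assumes "r1 < 2*n" "r2 < 2*n" "b < K"
  shows "ws r2 \<le> ws r1 + b \<longleftrightarrow> kcc r2 \<le> kcc r1 + K*b"
proof (cases "r2 \<le> r1")
  case True
  thus ?thesis using ws_mono[OF True assms(1)] kcc_mono[OF True] by auto
next
  case False
  hence le: "r1 \<le> r2" by simp
  define S where "S = (\<Sum>i\<in>{r1..<r2}. gap i)"
  define Sm where "Sm = (\<Sum>i\<in>{r1..<r2}. min (gap i) K)"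
  have e1: "ws r2 = ws r1 + S" using ws_tele[OF le assms(2)] S_def by simp
  have e2: "kcc r2 = kcc r1 + K * Sm" using kcc_split[OF le] Sm_def by simp
  have "Sm \<le> S" unfolding Sm_def S_def by (intro sum_mono) auto
  have "S \<le> b \<longleftrightarrow> Sm \<le> b"
  proof
    assume "S \<le> b" thus "Sm \<le> b" using \<open>Sm \<le> S\<close> by simp
  next
    assume h: "Sm \<le> b"
    have "\<forall>i\<in>{r1..<r2}. min (gap i) K = gap i"
    proof
      fix i assume "i \<in> {r1..<r2}"
      hence "min (gap i) K \<le> Sm" unfolding Sm_def by (intro member_le_sum) auto
      thus "min (gap i) K = gap i" using h assms(3) by linarith
    qed
    hence "Sm = S" unfolding Sm_def S_def by simp
    thus "S \<le> b" using h by simp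
  qed
  moreover have "K * Sm \<le> K * b \<longleftrightarrow> Sm \<le> b" using K_pos by simp
  ultimately show ?thesis using e1 e2 by linarith
qed

end

definition MF :: "('a \<Rightarrow> 'b \<Rightarrow> 'c \<Rightarrow> bool) \<Rightarrow> 'a list \<Rightarrow> 'b list \<Rightarrow> 'c list \<Rightarrow> bool" where
  "MF R A B T \<longleftrightarrow> (\<exists>M. image_mset fst M = mset A \<and> image_mset (fst \<circ> snd) M = mset B \<and>
      image_mset (snd \<circ> snd) M = mset T \<and> (\<forall>(x,y,z)\<in>#M. R x y z))"

definition LF :: "('a \<Rightarrow> 'b \<Rightarrow> 'c \<Rightarrow> bool) \<Rightarrow> 'a list \<Rightarrow> 'b list \<Rightarrow> 'c list \<Rightarrow> bool" where
  "LF R A B T \<longleftrightarrow> length A = length B \<and> length T = length B \<and>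
     (\<exists>\<sigma> \<pi>. mset \<sigma> = mset [0..<length B] \<and> mset \<pi> = mset [0..<length B] \<and>
        (\<forall>i<length B. R (A!(\<sigma>!i)) (B!i) (T!(\<pi>!i))))"

lemma perm_of_mset_eq:
  assumes "mset xs = mset A"
  shows "\<exists>\<sigma>. mset \<sigma> = mset [0..<length A] \<and> xs = map (nth A) \<sigma>"
proof -
  obtain f where f: "bij_betw f {..<length xs} {..<length A}" "\<forall>i<length xs. xs ! i = A ! f i"
    using permutation_Ex_bij[OF assms] by blast
  have lx: "length xs = length A" using assms by (metis size_mset)
  define \<sigma> where "\<sigma> = map f [0..<length A]"
  have "mset \<sigma> = image_mset f (mset_set {..<length A})"
    unfolding \<sigma>_def by (simp add: mset_map atLeast_upt)
  also have "\<dots> = mset_set (f ` {..<length A})"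
    using f(1) lx by (simp add: bij_betw_def image_mset_mset_set)
  also have "\<dots> = mset_set {..<length A}" using f(1) lx by (simp add: bij_betw_def)
  also have "\<dots> = mset [0..<length A]" by (simp add: atLeast_upt)
  finally have "mset \<sigma> = mset [0..<length A]" .
  moreover have "xs = map (nth A) \<sigma>"
    unfolding \<sigma>_def using f(2) lx by (intro nth_equalityI) auto
  ultimately show ?thesis by blast
qed

lemma mset_map_perm:
  assumes "mset \<sigma> = mset [0..<length A]"
  shows "mset (map (nth A) \<sigma>) = mset A"
proof -
  have "mset (map (nth A) \<sigma>) = image_mset (nth A) (mset [0..<length A])"
    by (simp add: assms)
  also have "\<dots> = mset (map (nth A) [0..<length A])" by simp
  also have "\<dots> = mset A" by (simp add: map_nth)
  finally show ?thesis .
qed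

lemma perm_set: "mset \<sigma> = mset [0..<L] \<Longrightarrow> i < length \<sigma> \<Longrightarrow> \<sigma>!i < L"
  by (metis atLeastLessThan_iff nth_mem set_mset_mset set_upt)

lemma perm_len: "mset \<sigma> = mset [0..<L] \<Longrightarrow> length \<sigma> = L"
  by (metis length_upt minus_nat.diff_0 size_mset)

lemma MF_LF:
  fixes B :: "'b::linorder list"
  assumes "sorted B"
  shows "MF R A B T \<longleftrightarrow> LF R A B T"
proof
  assume "MF R A B T"
  then obtain M where M: "image_mset fst M = mset A" "image_mset (fst \<circ> snd) M = mset B"
    "image_mset (snd \<circ> snd) M = mset T" "\<forall>(x,y,z)\<in>#M. R x y z" unfolding MF_def by blast
  obtain ms0 where ms0: "mset ms0 = M" using ex_mset by blast
  define ms where "ms = sort_key (fst \<circ> snd) ms0"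
  have msM: "mset ms = M" unfolding ms_def using ms0 by simp
  have "sorted (map (fst \<circ> snd) ms)" unfolding ms_def by (metis sorted_sort_key)
  moreover have "mset (map (fst \<circ> snd) ms) = mset B" using msM M(2) by simp
  ultimately have mB: "map (fst \<circ> snd) ms = B"
    using properties_for_sort[of "map (fst \<circ> snd) ms" B] sorted_sort_id[OF assms] by simp
  have lms: "length ms = length B" using mB by (metis length_map)
  have mA: "mset (map fst ms) = mset A" using msM M(1) by simp
  have mT: "mset (map (snd \<circ> snd) ms) = mset T" using msM M(3) by simp
  obtain \<sigma> where \<sigma>: "mset \<sigma> = mset [0..<length A]" "map fst ms = map (nth A) \<sigma>"
    using perm_of_mset_eq[OF mA] by blast
  obtain \<pi> where \<pi>: "mset \<pi> = mset [0..<length T]" "map (snd \<circ> snd) ms = map (nth T) \<pi>"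
    using perm_of_mset_eq[OF mT] by blast
  have lA: "length A = length B" using mA lms by (metis length_map size_mset)
  have lT: "length T = length B" using mT lms by (metis length_map size_mset)
  have "\<forall>i<length B. R (A!(\<sigma>!i)) (B!i) (T!(\<pi>!i))"
  proof (intro allI impI)
    fix i assume i: "i < length B"
    have "ms!i \<in># M" using msM i lms by (metis nth_mem set_mset_mset)
    hence "R (fst (ms!i)) (fst (snd (ms!i))) (snd (snd (ms!i)))" using M(4) by (auto split: prod.splits)
    moreover have "fst (ms!i) = A!(\<sigma>!i)"
      using \<sigma>(2) i lms by (metis length_map nth_map)
    moreover have "snd (snd (ms!i)) = T!(\<pi>!i)"
      using \<pi>(2) i lms by (metis comp_apply length_map nth_map)
    moreover have "fst (snd (ms!i)) = B!i" using mB i lms by (metis comp_apply nth_map)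
    ultimately show "R (A!(\<sigma>!i)) (B!i) (T!(\<pi>!i))" by simp
  qed
  thus "LF R A B T" unfolding LF_def using \<sigma>(1) \<pi>(1) lA lT by metis
next
  assume "LF R A B T"
  then obtain \<sigma> \<pi> where l: "length A = length B" "length T = length B"
    and s: "mset \<sigma> = mset [0..<length B]" "mset \<pi> = mset [0..<length B]"
    and R: "\<forall>i<length B. R (A!(\<sigma>!i)) (B!i) (T!(\<pi>!i))" unfolding LF_def by blast
  have ls: "length \<sigma> = length B" "length \<pi> = length B" using s perm_len by auto
  define M where "M = mset (map (\<lambda>i. (A!(\<sigma>!i), B!i, T!(\<pi>!i))) [0..<length B])"
  have "image_mset fst M = mset (map (\<lambda>i. A!(\<sigma>!i)) [0..<length B])"
    by (simp only: M_def mset_map[symmetric] map_map) (simp add: comp_def)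
  also have "map (\<lambda>i. A!(\<sigma>!i)) [0..<length B] = map (nth A) \<sigma>"
    using ls by (intro nth_equalityI) auto
  also have "mset \<dots> = mset A" using mset_map_perm[of \<sigma> A] s l by simp
  finally have 1: "image_mset fst M = mset A" .
  have "image_mset (snd \<circ> snd) M = mset (map (\<lambda>i. T!(\<pi>!i)) [0..<length B])"
    by (simp only: M_def mset_map[symmetric] map_map) (simp add: comp_def)
  also have "map (\<lambda>i. T!(\<pi>!i)) [0..<length B] = map (nth T) \<pi>"
    using ls by (intro nth_equalityI) auto
  also have "mset \<dots> = mset T" using mset_map_perm[of \<pi> T] s l by simp
  finally have 3: "image_mset (snd \<circ> snd) M = mset T" .
  have 2: "image_mset (fst \<circ> snd) M = mset B"
    by (simp only: M_def mset_map[symmetric] map_map) (simp add: comp_def map_nth)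
  have 4: "\<forall>(x,y,z)\<in>#M. R x y z" unfolding M_def using R by auto
  show "MF R A B T" unfolding MF_def using 1 2 3 4 by blast
qed

lemma LF_transfer:
  assumes "length A = L" "length B = L" "length T = L" "length A' = L" "length B' = L" "length T' = L"
  and "\<And>i j b. i < L \<Longrightarrow> j < L \<Longrightarrow> b < L \<Longrightarrow> R (A!i) (B!b) (T!j) \<longleftrightarrow> R' (A'!i) (B'!b) (T'!j)"
  shows "LF R A B T \<longleftrightarrow> LF R' A' B' T'"
proof -
  have key: "(\<forall>i<L. R (A!(\<sigma>!i)) (B!i) (T!(\<pi>!i))) \<longleftrightarrow> (\<forall>i<L. R' (A'!(\<sigma>!i)) (B'!i) (T'!(\<pi>!i)))"
    if "mset \<sigma> = mset [0..<L]" "mset \<pi> = mset [0..<L]" for \<sigma> \<pi>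
    using assms(7) perm_set[OF that(1)] perm_set[OF that(2)] perm_len[OF that(1)] perm_len[OF that(2)]
    by auto
  show ?thesis unfolding LF_def assms(1-6) using key by blast
qed

lemma MF_cong: "mset A = mset A' \<Longrightarrow> mset B = mset B' \<Longrightarrow> mset T = mset T' \<Longrightarrow> MF R A B T = MF R A' B' T'"
  unfolding MF_def by simp

definition PMm :: "int list \<Rightarrow> int list \<Rightarrow> int list \<Rightarrow> bool" where
  "PMm D X T \<longleftrightarrow> (\<exists>M :: (int \<times> int \<times> int) multiset. image_mset fst M = mset D \<and>
      image_mset (fst \<circ> snd) M = mset X \<and> image_mset (snd \<circ> snd) M = mset T \<and>
      (\<forall>(d, x, y) \<in># M. x \<le> d \<and> y \<le> d + x))"

lemma pos_match_PMm: "pos_match D T = PMm (map int D) (discretize (map int D)) (map int T)"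
  unfolding pos_match_def PMm_def by simp

lemma sum_eq_pointwise:
  fixes f g :: "'a \<Rightarrow> int"
  assumes "\<forall>p\<in>#A. f p \<le> g p" "sum_mset (image_mset f A) = sum_mset (image_mset g A)"
  shows "\<forall>p\<in>#A. f p = g p"
  using assms
proof (induction A)
  case empty thus ?case by simp
next
  case (add x A)
  have h1: "\<forall>p\<in>#A. f p \<le> g p" using add.prems(1) by simp
  have s: "sum_mset (image_mset f A) \<le> sum_mset (image_mset g A)"
    using h1 by (intro sum_mset_mono) blast
  have fx: "f x \<le> g x" using add.prems(1) by simp
  have eq: "f x + sum_mset (image_mset f A) = g x + sum_mset (image_mset g A)"
    using add.prems(2) by simp
  have e1: "f x = g x" using s fx eq by linarith
  have e2: "sum_mset (image_mset f A) = sum_mset (image_mset g A)" using s fx eq by linarith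
  have "\<forall>p\<in>#A. f p = g p" using add.IH[OF h1 e2] .
  thus ?case using e1 by simp
qed

lemma subset_size_eq:
  assumes "A \<subseteq># B" "size A = size B" shows "A = B"
  using assms mset_subset_size subset_mset.le_less by fastforce

lemma filter_all: "(\<forall>x\<in>#M. P x) \<Longrightarrow> filter_mset P M = M"
  by (induction M) auto

lemma in_image_mset: "p \<in># M \<Longrightarrow> f p \<in># image_mset f M" by simp

lemma image_diff:
  assumes "M = A + B" shows "image_mset f B = image_mset f M - image_mset f A"
  using assms by simp

lemma forcing:
  fixes F Rd XA XR RT :: "int list" and V Fb :: int and L :: nat
  assumes D: "D = F @ Rd @ replicate L V"
  and X: "X = XA @ map (\<lambda>q. V - int L + 1 + int q) [0..<L]"
  and XA: "mset XA = mset F + mset XR"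
  and T: "T = RT @ map (\<lambda>f. 2*f) F @ map (\<lambda>q. 2*V - int L + 1 + int q) [0..<L]"
  and hF: "\<forall>f\<in>set F. f \<le> Fb"
  and hRd: "\<forall>d\<in>set Rd. Fb < d"
  and hRT: "\<forall>y\<in>set RT. 2*Fb < y \<and> y \<le> 2*V - int L"
  and hDs: "\<forall>d\<in>set F \<union> set Rd. 2*d \<le> 2*V - int L"
  and hXA: "\<forall>x\<in>set XA. x \<le> V - int L"
  and hXR: "\<forall>x\<in>set XR. \<forall>d\<in>set Rd. x \<le> d"
  shows "PMm D X T \<longleftrightarrow> MF (\<lambda>d x y. y \<le> d + x) Rd XR RT"
proof
  define XB where "XB = map (\<lambda>q. V - int L + 1 + int q) [0..<L]"
  define Dum where "Dum = map (\<lambda>q. 2*V - int L + 1 + int q) [0..<L]"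
  define FT where "FT = map (\<lambda>f. 2*f) F"
  assume "PMm D X T"
  then obtain M :: "(int \<times> int \<times> int) multiset" where
    M1: "image_mset fst M = mset D" and M2: "image_mset (fst \<circ> snd) M = mset X"
    and M3: "image_mset (snd \<circ> snd) M = mset T" and M4: "\<forall>(d, x, y) \<in># M. x \<le> d \<and> y \<le> d + x"
    unfolding PMm_def by blast
  have M4': "\<And>p. p \<in># M \<Longrightarrow> fst (snd p) \<le> fst p \<and> snd (snd p) \<le> fst p + fst (snd p)"
    using M4 by auto
  define Mb where "Mb = filter_mset (\<lambda>p. 2*V - int L + 1 \<le> (snd \<circ> snd) p) M"
  define Mr where "Mr = filter_mset (\<lambda>p. \<not> 2*V - int L + 1 \<le> (snd \<circ> snd) p) M"
  have MbMr: "M = Mb + Mr" unfolding Mb_def Mr_def by (rule multiset_partition)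
  have Mb_sub: "Mb \<subseteq># M" unfolding Mb_def by simp
  have Mr_sub: "Mr \<subseteq># M" unfolding Mr_def by simp
  have Teq: "T = RT @ FT @ Dum" unfolding T FT_def Dum_def by simp
  have mT: "mset T = mset RT + mset FT + mset Dum" unfolding T FT_def Dum_def by simp
  have fRT: "filter (\<lambda>y. 2*V - int L + 1 \<le> y) RT = []" using hRT by (auto simp: filter_empty_conv)
  have hF2: "\<forall>f\<in>set F. 2*f \<le> 2*V - int L" using hDs by blast
  have fFT: "filter (\<lambda>y. 2*V - int L + 1 \<le> y) FT = []" using hF2 unfolding FT_def by (fastforce simp: filter_empty_conv)
  have fDum: "filter (\<lambda>y. 2*V - int L + 1 \<le> y) Dum = Dum" unfolding Dum_def by (auto simp: filter_id_conv)
  have yMb: "image_mset (snd \<circ> snd) Mb = mset Dum"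
  proof -
    have "image_mset (snd \<circ> snd) Mb = filter_mset (\<lambda>y. 2*V - int L + 1 \<le> y) (image_mset (snd \<circ> snd) M)"
      unfolding Mb_def by (rule image_mset_filter_mset_swap)
    also have "\<dots> = mset (filter (\<lambda>y. 2*V - int L + 1 \<le> y) (RT @ FT @ Dum))"
      using M3 Teq by simp
    also have "\<dots> = mset Dum" using fRT fFT fDum by simp
    finally show ?thesis .
  qed
  have sMb: "size Mb = L" using arg_cong[OF yMb, of size] unfolding Dum_def by simp
  have Mb_prop: "fst p = V \<and> V - int L + 1 \<le> fst (snd p)" if p: "p \<in># Mb" for p
  proof -
    have pM: "p \<in># M" using p Mb_sub by (meson mset_subset_eqD)
    have y: "2*V - int L + 1 \<le> snd (snd p)" using p unfolding Mb_def by simp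
    have "fst p \<in># mset D" using M1 in_image_mset[OF pM, of fst] by simp
    hence "fst p \<in> set (F @ Rd @ replicate L V)" unfolding D by (simp only: set_mset_mset)
    hence dD: "fst p \<in> set F \<or> fst p \<in> set Rd \<or> fst p = V" by (auto split: if_splits)
    have "fst p = V"
    proof (rule ccontr)
      assume "fst p \<noteq> V"
      hence "2 * fst p \<le> 2*V - int L" using dD hDs by auto
      thus False using M4'[OF pM] y by linarith
    qed
    thus ?thesis using M4'[OF pM] y by linarith
  qed
  have dMb: "image_mset fst Mb = replicate_mset L V"
  proof -
    have "image_mset fst Mb = image_mset (\<lambda>p. V) Mb" using Mb_prop by (intro image_mset_cong) auto
    also have "\<dots> = replicate_mset (size Mb) V" by (rule image_mset_const_eq)
    finally show ?thesis using sMb by simp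
  qed
  have xMb: "image_mset (fst \<circ> snd) Mb = mset XB"
  proof -
    have "image_mset (fst \<circ> snd) Mb \<subseteq># image_mset (fst \<circ> snd) M" using Mb_sub by (rule image_mset_subseteq_mono)
    hence s1: "image_mset (fst \<circ> snd) Mb \<subseteq># mset XA + mset XB" using M2 unfolding X XB_def by simp
    have "image_mset (fst \<circ> snd) Mb = filter_mset (\<lambda>x. V - int L + 1 \<le> x) (image_mset (fst \<circ> snd) Mb)"
    proof (intro filter_all[symmetric] ballI)
      fix x assume "x \<in># image_mset (fst \<circ> snd) Mb"
      then obtain p where "p \<in># Mb" "x = fst (snd p)" by auto
      thus "V - int L + 1 \<le> x" using Mb_prop by blast
    qed
    also have "\<dots> \<subseteq># filter_mset (\<lambda>x. V - int L + 1 \<le> x) (mset XA + mset XB)"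
      using s1 by (rule multiset_filter_mono)
    also have "\<dots> = mset XB"
    proof -
      have "filter (\<lambda>x. V - int L + 1 \<le> x) XA = []" using hXA by (auto simp: filter_empty_conv)
      moreover have "filter (\<lambda>x. V - int L + 1 \<le> x) XB = XB" unfolding XB_def by (auto simp: filter_id_conv)
      moreover have "filter_mset (\<lambda>x. V - int L + 1 \<le> x) (mset XA + mset XB) =
         mset (filter (\<lambda>x. V - int L + 1 \<le> x) XA) + mset (filter (\<lambda>x. V - int L + 1 \<le> x) XB)" by simp
      ultimately show ?thesis by simp
    qed
    finally have "image_mset (fst \<circ> snd) Mb \<subseteq># mset XB" .
    moreover have "size (image_mset (fst \<circ> snd) Mb) = size (mset XB)" using sMb unfolding XB_def by simp
    ultimately show ?thesis by (rule subset_size_eq)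
  qed
  have dMr: "image_mset fst Mr = mset F + mset Rd"
    using image_diff[OF MbMr, of fst] M1 dMb unfolding D by simp
  have xMr: "image_mset (fst \<circ> snd) Mr = mset XA"
    using image_diff[OF MbMr, of "fst \<circ> snd"] M2 xMb unfolding X XB_def by simp
  have yMr: "image_mset (snd \<circ> snd) Mr = mset RT + mset FT"
    using image_diff[OF MbMr, of "snd \<circ> snd"] M3 yMb mT by simp
  define Mf where "Mf = filter_mset (\<lambda>p. fst p \<le> Fb) Mr"
  define Mq where "Mq = filter_mset (\<lambda>p. \<not> fst p \<le> Fb) Mr"
  have MfMq: "Mr = Mf + Mq" unfolding Mf_def Mq_def by (rule multiset_partition)
  have Mf_sub: "Mf \<subseteq># M" unfolding Mf_def using Mr_sub by (meson multiset_filter_subset subset_mset.order_trans)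
  have Mq_sub: "Mq \<subseteq># M" unfolding Mq_def using Mr_sub by (meson multiset_filter_subset subset_mset.order_trans)
  have dMf: "image_mset fst Mf = mset F"
  proof -
    have "image_mset fst Mf = filter_mset (\<lambda>d. d \<le> Fb) (image_mset fst Mr)"
      unfolding Mf_def by (rule image_mset_filter_mset_swap)
    also have "\<dots> = mset (filter (\<lambda>d. d \<le> Fb) (F @ Rd))" using dMr by simp
    also have "filter (\<lambda>d. d \<le> Fb) (F @ Rd) = F"
      using hF hRd by (auto simp: filter_id_conv filter_empty_conv)
    finally show ?thesis .
  qed
  have dMq: "image_mset fst Mq = mset Rd"
    using image_diff[OF MfMq, of fst] dMr dMf by simp
  have Mf_y: "snd (snd p) \<le> 2 * fst p" "fst p \<le> Fb" if p: "p \<in># Mf" for p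
  proof -
    have pM: "p \<in># M" using p Mf_sub by (meson mset_subset_eqD)
    show "snd (snd p) \<le> 2 * fst p" using M4'[OF pM] by linarith
    show "fst p \<le> Fb" using p unfolding Mf_def by simp
  qed
  have yMf: "image_mset (snd \<circ> snd) Mf = mset FT"
  proof -
    have "image_mset (snd \<circ> snd) Mf \<subseteq># image_mset (snd \<circ> snd) Mr"
      using MfMq by (simp add: image_mset_subseteq_mono)
    hence s1: "image_mset (snd \<circ> snd) Mf \<subseteq># mset RT + mset FT" using yMr by simp
    have "image_mset (snd \<circ> snd) Mf = filter_mset (\<lambda>y. y \<le> 2*Fb) (image_mset (snd \<circ> snd) Mf)"
    proof (intro filter_all[symmetric] ballI)
      fix y assume "y \<in># image_mset (snd \<circ> snd) Mf"
      then obtain p where "p \<in># Mf" "y = snd (snd p)" by auto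
      thus "y \<le> 2*Fb" using Mf_y by fastforce
    qed
    also have "\<dots> \<subseteq># filter_mset (\<lambda>y. y \<le> 2*Fb) (mset RT + mset FT)"
      using s1 by (rule multiset_filter_mono)
    also have "\<dots> = mset FT"
    proof -
      have "filter (\<lambda>y. y \<le> 2*Fb) RT = []" using hRT by (auto simp: filter_empty_conv)
      moreover have "filter (\<lambda>y. y \<le> 2*Fb) FT = FT" using hF unfolding FT_def by (auto simp: filter_id_conv)
      moreover have "filter_mset (\<lambda>y. y \<le> 2*Fb) (mset RT + mset FT) =
         mset (filter (\<lambda>y. y \<le> 2*Fb) RT) + mset (filter (\<lambda>y. y \<le> 2*Fb) FT)" by simp
      ultimately show ?thesis by simp
    qed
    finally have "image_mset (snd \<circ> snd) Mf \<subseteq># mset FT" .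
    moreover have "size (image_mset (snd \<circ> snd) Mf) = size (mset FT)"
      using arg_cong[OF dMf, of size] unfolding FT_def by simp
    ultimately show ?thesis by (rule subset_size_eq)
  qed
  have sumeq: "sum_mset (image_mset (snd \<circ> snd) Mf) = sum_mset (image_mset (\<lambda>p. 2 * fst p) Mf)"
  proof -
    have "sum_mset (image_mset (\<lambda>p. 2 * fst p) Mf) = sum_mset (image_mset (\<lambda>d. 2 * d) (image_mset fst Mf))"
      by (simp add: image_mset.compositionality comp_def)
    also have "\<dots> = sum_list FT" unfolding dMf FT_def by (metis mset_map sum_mset_sum_list)
    also have "\<dots> = sum_mset (image_mset (snd \<circ> snd) Mf)" using yMf by (simp add: sum_mset_sum_list)
    finally show ?thesis by simp
  qed
  have eqy: "\<forall>p\<in>#Mf. (snd \<circ> snd) p = 2 * fst p"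
    using sum_eq_pointwise[of Mf "snd \<circ> snd" "\<lambda>p. 2 * fst p"] Mf_y sumeq by auto
  have xMf: "image_mset (fst \<circ> snd) Mf = mset F"
  proof -
    have "image_mset (fst \<circ> snd) Mf = image_mset fst Mf"
    proof (rule image_mset_cong)
      fix p assume p: "p \<in># Mf"
      have pM: "p \<in># M" using p Mf_sub by (meson mset_subset_eqD)
      show "(fst \<circ> snd) p = fst p" using M4'[OF pM] eqy p by fastforce
    qed
    thus ?thesis using dMf by simp
  qed
  have xMq: "image_mset (fst \<circ> snd) Mq = mset XR"
    using image_diff[OF MfMq, of "fst \<circ> snd"] xMr xMf XA by simp
  have yMq: "image_mset (snd \<circ> snd) Mq = mset RT"
    using image_diff[OF MfMq, of "snd \<circ> snd"] yMr yMf by simp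
  have cMq: "\<forall>(d, x, y)\<in>#Mq. y \<le> d + x"
    using M4 Mq_sub by (auto dest: mset_subset_eqD)
  show "MF (\<lambda>d x y. y \<le> d + x) Rd XR RT"
    unfolding MF_def using dMq xMq yMq cMq by blast
next
  assume "MF (\<lambda>d x y. y \<le> d + x) Rd XR RT"
  then obtain Mq :: "(int \<times> int \<times> int) multiset" where
    q1: "image_mset fst Mq = mset Rd" and q2: "image_mset (fst \<circ> snd) Mq = mset XR"
    and q3: "image_mset (snd \<circ> snd) Mq = mset RT" and q4: "\<forall>(d, x, y)\<in>#Mq. y \<le> d + x"
    unfolding MF_def by blast
  define M where "M = Mq + mset (map (\<lambda>f. (f, f, 2*f)) F) +
     mset (map (\<lambda>q. (V, V - int L + 1 + int q, 2*V - int L + 1 + int q)) [0..<L])"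
  have "image_mset fst M = mset D"
    unfolding M_def D using q1 by (simp add: image_mset.compositionality comp_def image_mset_const_eq)
  moreover have "image_mset (fst \<circ> snd) M = mset X"
    unfolding M_def X using q2 XA by (simp add: image_mset.compositionality comp_def)
  moreover have "image_mset (snd \<circ> snd) M = mset T"
    unfolding M_def T using q3 by (simp add: image_mset.compositionality comp_def)
  moreover have "\<forall>(d, x, y)\<in>#M. x \<le> d \<and> y \<le> d + x"
  proof -
    have "x \<le> d" if p: "(d, x, y) \<in># Mq" for d x y
    proof -
      have "d \<in># mset Rd" using in_image_mset[OF p, of fst] q1 by simp
      moreover have "x \<in># mset XR" using in_image_mset[OF p, of "fst \<circ> snd"] q2 by simp
      ultimately show ?thesis using hXR by auto
    qed
    thus ?thesis unfolding M_def using q4 by auto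
  qed
  ultimately show "PMm D X T" unfolding PMm_def by blast
qed

lemma disc_Cons: "discretize (d # ds) = (case discretize ds of [] \<Rightarrow> [d] | x # _ \<Rightarrow> min (x - 1) d # discretize ds)"
  by (simp add: discretize_def split: list.splits)

lemma disc_Nil: "discretize [] = []" by (simp add: discretize_def)

lemma disc_len: "length (discretize ds) = length ds"
  by (induction ds) (auto simp: disc_Cons disc_Nil split: list.splits)

lemma disc_rep_Suc: "discretize (replicate (Suc L) v) = map (\<lambda>q. v - int L + int q) [0..<Suc L]"
proof (induction L)
  case 0 thus ?case by (simp add: discretize_def)
next
  case (Suc L)
  have "discretize (replicate (Suc (Suc L)) v) = discretize (v # replicate (Suc L) v)"
    by (simp only: replicate_Suc)
  also have "\<dots> = min (v - int L - 1) v # map (\<lambda>q. v - int L + int q) [0..<Suc L]"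
    by (simp only: disc_Cons Suc.IH map_upt_Suc list.case) simp
  also have "\<dots> = map (\<lambda>q. v - int (Suc L) + int q) [0..<Suc (Suc L)]"
    by (simp del: upt_Suc add: map_upt_Suc)
  finally show ?case .
qed

lemma disc_rep: "discretize (replicate L v) = map (\<lambda>q. v - int L + 1 + int q) [0..<L]"
proof (cases L)
  case 0 thus ?thesis by (simp add: discretize_def)
next
  case (Suc L')
  thus ?thesis using disc_rep_Suc[of L' v] by simp
qed

lemma disc_app:
  assumes "discretize ys = h # hs" "\<forall>j<length xs. h - int (length xs - j) \<le> xs!j"
  shows "discretize (xs @ ys) = map (\<lambda>j. h - int (length xs - j)) [0..<length xs] @ discretize ys"
  using assms(2)
proof (induction xs)
  case Nil thus ?case by simp
next
  case (Cons x xs)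
  have h1: "\<forall>j<length xs. h - int (length xs - j) \<le> xs!j"
  proof (intro allI impI)
    fix j assume "j < length xs"
    thus "h - int (length xs - j) \<le> xs!j" using Cons.prems[rule_format, of "Suc j"] by simp
  qed
  have ih: "discretize (xs @ ys) = map (\<lambda>j. h - int (length xs - j)) [0..<length xs] @ discretize ys"
    using Cons.IH[OF h1] .
  have hd: "\<exists>r. discretize (xs @ ys) = (h - int (length xs)) # r"
    using ih assms(1) by (cases xs) (auto simp del: upt_Suc simp add: map_upt_Suc)
  then obtain r where r: "discretize (xs @ ys) = (h - int (length xs)) # r" by blast
  have x: "h - int (Suc (length xs)) \<le> x" using Cons.prems[rule_format, of 0] by simp
  have "discretize ((x # xs) @ ys) = min (h - int (length xs) - 1) x # discretize (xs @ ys)"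
    using r by (simp add: disc_Cons)
  also have "min (h - int (length xs) - 1) x = h - int (Suc (length xs))" using x by simp
  finally show ?case using ih by (simp del: upt_Suc add: map_upt_Suc)
qed

lemma filter_mult:
  assumes "0 < K"
  shows "filter (\<lambda>c. c mod K = 0) [1..<m*K+1] = map (\<lambda>b. K*(b+1)) [0..<m]"
proof (induction m)
  case 0 thus ?case by simp
next
  case (Suc m)
  have split: "[1..<Suc m * K + 1] = [1..<m*K+1] @ [m*K+1..<m*K+K] @ [m*K+K]"
  proof -
    have "[1..<Suc m * K + 1] = [1..<m*K+1] @ [m*K+1..<m*K+1+K]"
      using upt_add_eq_append[of 1 "m*K+1" K] by (simp add: add.commute add.left_commute)
    also have "[m*K+1..<m*K+1+K] = [m*K+1..<m*K+K] @ [m*K+K]"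
    proof -
      have e: "m*K+1+K = Suc (m*K+K)" by simp
      have "m*K+1 \<le> m*K+K" using assms by simp
      thus ?thesis unfolding e by (rule upt_Suc_append)
    qed
    finally show ?thesis by simp
  qed
  have "filter (\<lambda>c. c mod K = 0) [m*K+1..<m*K+K] = []"
  proof (rule filter_False, intro ballI)
    fix c assume "c \<in> set [m*K+1..<m*K+K]"
    hence c: "m*K < c" "c < m*K + K" by auto
    show "\<not> c mod K = 0"
    proof
      assume "c mod K = 0"
      then obtain q where "c = K * q" by auto
      hence "K*m < K*q" "K*q < K*(m+1)" using c by (simp_all add: mult.commute distrib_left)
      hence "m < q" "q < m + 1" using assms by (meson mult_less_cancel1)+
      thus False by simp
    qed
  qed
  thus ?case using Suc.IH split by simp
qed

context inst begin

definition W where "W = kcc (2*n - 1)"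
definition NN where "NN = n * K"
definition LL where "LL = 2 * (NN + n + W + 1)"
definition VV where "VV = LL + NN + 1"
definition MM where "MM = NN + LL"
definition fillc where "fillc = filter (\<lambda>c. c mod K \<noteq> 0) [1..<NN+1]"
definition realsD where "realsD = map (\<lambda>r. 1 + 2*NN + n + kcc r) (filter (\<lambda>r. perm r < n) [0..<2*n])"
definition Dl where "Dl = map Suc fillc @ realsD @ replicate LL VV"
definition realsT where "realsT = map (\<lambda>j. 2 + 2*NN + n + kcc (rank (n+j)) - j) [0..<n]"
definition Tl where "Tl = realsT @ map (\<lambda>c. 2 + 2*c) fillc @ map (\<lambda>q. 2*VV - LL + 1 + q) [0..<LL]"
definition XR where "XR = map (\<lambda>b. 1 + K*(b+1)) [0..<n]"
definition realsA where "realsA = map (\<lambda>i. 1 + 2*NN + n + kcc (rank i)) [0..<n]"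

lemma multK: "filter (\<lambda>c. c mod K = 0) [1..<NN+1] = map (\<lambda>b. K*(b+1)) [0..<n]"
  unfolding NN_def using filter_mult[OF K_pos, of n] by (simp add: mult.commute)

lemma len_fillc: "length fillc = n*n"
proof -
  have "length fillc + length (filter (\<lambda>c. c mod K = 0) [1..<NN+1]) = NN"
    unfolding fillc_def using sum_length_filter_compl[of "\<lambda>c. c mod K \<noteq> 0" "[1..<NN+1]"] by simp
  thus ?thesis using multK by (simp add: NN_def K_def)
qed

lemma kcc_le_W: "r < 2*n \<Longrightarrow> kcc r \<le> W"
  unfolding W_def by (intro kcc_mono) simp

lemma kcc_mult: "kcc r = K * (\<Sum>i<r. min (gap i) K)"
  unfolding kcc_def by (simp add: sum_distrib_left)

lemma set_filter_perm: "set (filter (\<lambda>r. perm r < n) [0..<2*n]) = rank ` {..<n}"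
proof
  show "set (filter (\<lambda>r. perm r < n) [0..<2*n]) \<subseteq> rank ` {..<n}"
    using rank_perm by (force simp: image_iff)
  show "rank ` {..<n} \<subseteq> set (filter (\<lambda>r. perm r < n) [0..<2*n])"
    using rank_lt perm_rank by auto
qed

lemma mset_filter_perm: "mset (filter (\<lambda>r. perm r < n) [0..<2*n]) = mset (map rank [0..<n])"
proof -
  have d1: "distinct (filter (\<lambda>r. perm r < n) [0..<2*n])" by simp
  have d2: "distinct (map rank [0..<n])"
  proof -
    have "inj_on rank {0..<n}" using rank_inj by (rule inj_on_subset) auto
    thus ?thesis by (simp add: distinct_map)
  qed
  have "set (filter (\<lambda>r. perm r < n) [0..<2*n]) = set (map rank [0..<n])" using set_filter_perm by auto
  thus ?thesis using set_eq_iff_mset_eq_distinct[OF d1 d2] by blast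
qed

lemma len_realsD: "length realsD = n"
proof -
  have "length (filter (\<lambda>r. perm r < n) [0..<2*n]) = length (map rank [0..<n])"
    by (metis mset_filter_perm size_mset)
  thus ?thesis unfolding realsD_def by simp
qed

lemma mset_realsD: "mset realsD = mset realsA"
  unfolding realsD_def realsA_def mset_map mset_filter_perm
  by (simp add: image_mset.compositionality comp_def)

end

lemma mult_cancel_aux:
  fixes c1 c2 j K :: nat
  assumes "j < K"
  shows "K*c1 \<le> K*c2 + j \<longleftrightarrow> c1 \<le> c2"
proof
  assume h: "K*c1 \<le> K*c2 + j"
  show "c1 \<le> c2"
  proof (rule ccontr)
    assume "\<not> c1 \<le> c2"
    hence "Suc c2 \<le> c1" by simp
    hence "K * Suc c2 \<le> K * c1" by (rule mult_le_mono2)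
    thus False using h assms by simp
  qed
next
  assume "c1 \<le> c2" thus "K*c1 \<le> K*c2 + j" by (simp add: trans_le_add1)
qed

lemma mod_cancel_aux:
  fixes c1 c2 j1 j2 K :: nat
  assumes "K*c1 + j2 = K*c2 + j1" "j1 < K" "j2 < K"
  shows "j1 = j2"
proof -
  have "(K*c1 + j2) mod K = j2" using assms(3) by simp
  moreover have "(K*c2 + j1) mod K = j1" using assms(2) by simp
  ultimately show ?thesis using assms(1) by simp
qed

lemma sorted_map_upt_mono:
  assumes "\<And>i j. i \<le> j \<Longrightarrow> f i \<le> (f j :: nat)"
  shows "sorted (map f [0..<m])"
  unfolding sorted_iff_nth_mono using assms by simp

lemma mset_map_filter_split:
  "mset (map g xs) = mset (map g (filter P xs)) + mset (map g (filter (\<lambda>x. \<not> P x) xs))"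
  by (induction xs) auto

context inst begin

lemma in3dm_MF: "in3dm a t \<longleftrightarrow> MF (\<lambda>x y z. z \<le> x + y) a [1..<Suc n] t"
  unfolding in3dm_def MF_def by simp

lemma a_nth: "i < n \<Longrightarrow> a!i = ws (rank i)"
  using ws_rank[of i] by (simp add: w_def nth_append)

lemma t_nth: "j < n \<Longrightarrow> t!j = ws (rank (n+j))"
  using ws_rank[of "n+j"] len by (simp add: w_def nth_append)

lemma pointwise:
  assumes "i < n" "j < n" "b < n"
  shows "t!j \<le> a!i + [1..<Suc n]!b \<longleftrightarrow>
    int (realsT!j) \<le> int (realsA!i) + int (XR!b)"
proof -
  define rA where "rA = rank i"
  define rT where "rT = rank (n+j)"
  have rA: "rA < 2*n" unfolding rA_def using rank_lt assms by simp
  have rT: "rT < 2*n" unfolding rT_def using rank_lt assms by simp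
  obtain c1 where c1: "kcc rT = K*c1" using kcc_mult by blast
  obtain c2 where c2: "kcc rA = K*c2" using kcc_mult by blast
  have jK: "j < K" using assms by (simp add: K_def)
  have "t!j \<le> a!i + [1..<Suc n]!b \<longleftrightarrow> ws rT \<le> ws rA + Suc b"
    using assms by (simp del: upt_Suc add: a_nth t_nth rA_def rT_def nth_upt)
  also have "\<dots> \<longleftrightarrow> kcc rT \<le> kcc rA + K * Suc b"
    using compress[OF rA rT, of "Suc b"] assms by (simp add: K_def)
  also have "\<dots> \<longleftrightarrow> K*c1 \<le> K*(c2 + Suc b)" using c1 c2 by (simp add: distrib_left add_ac)
  also have "\<dots> \<longleftrightarrow> K*c1 \<le> K*(c2 + Suc b) + j"
  proof -
    have e: "K*c1 \<le> K*(c2 + Suc b) \<longleftrightarrow> c1 \<le> c2 + Suc b" using K_pos by (simp only: mult_le_cancel1) simp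
    show ?thesis using e mult_cancel_aux[OF jK, of c1 "c2 + Suc b"] by blast
  qed
  also have "\<dots> \<longleftrightarrow> 2 + 2*NN + n + kcc rT - j \<le> (1 + 2*NN + n + kcc rA) + (1 + K*(b+1))"
    using c1 c2 assms by (simp add: distrib_left) linarith
  also have "\<dots> \<longleftrightarrow> int (realsT!j) \<le> int (realsA!i) + int (XR!b)"
  proof -
    have e1: "realsT!j = 2 + 2*NN + n + kcc rT - j" using assms by (simp add: realsT_def rT_def)
    have e2: "realsA!i = 1 + 2*NN + n + kcc rA" using assms by (simp add: realsA_def rA_def)
    have e3: "XR!b = 1 + K*(b+1)" using assms by (simp add: XR_def)
    show ?thesis unfolding e1 e2 e3 by (simp only: of_nat_add[symmetric] of_nat_le_iff)
  qed
  finally show ?thesis .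
qed

lemma sorted_XR: "sorted (map int XR)"
proof -
  have "sorted XR" unfolding XR_def by (intro sorted_map_upt_mono) simp
  thus ?thesis by (simp add: sorted_map)
qed

lemma step_LF: "in3dm a t \<longleftrightarrow> MF (\<lambda>d x y. y \<le> d + x) (map int realsA) (map int XR) (map int realsT)"
proof -
  have "in3dm a t \<longleftrightarrow> LF (\<lambda>x y z. z \<le> x + y) a [1..<Suc n] t"
    by (rule trans[OF in3dm_MF MF_LF[OF sorted_upt]])
  also have "\<dots> \<longleftrightarrow> LF (\<lambda>d x y. y \<le> d + x) (map int realsA) (map int XR) (map int realsT)"
    by (rule LF_transfer[where L=n]) (use len pointwise in \<open>auto simp del: upt_Suc simp: realsA_def XR_def realsT_def\<close>)
  also have "\<dots> \<longleftrightarrow> MF (\<lambda>d x y. y \<le> d + x) (map int realsA) (map int XR) (map int realsT)"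
    by (rule MF_LF[OF sorted_XR, symmetric])
  finally show ?thesis .
qed


lemma fillc_props: "c \<in> set fillc \<Longrightarrow> 1 \<le> c \<and> c \<le> NN"
  by (auto simp: fillc_def)

lemma fillc_sorted: "sorted_wrt (<) fillc"
  unfolding fillc_def by (rule sorted_wrt_filter) (rule sorted_wrt_upt)

lemma fillc_nth: assumes "j < length fillc" shows "j + 1 \<le> fillc!j"
proof -
  have "sorted_wrt (<) (0 # fillc)" using fillc_sorted fillc_props by fastforce
  from sorted_wrt_less_idx[OF this, of "Suc j"] show ?thesis using assms by simp
qed

lemma realsD_bounds: "d \<in> set realsD \<Longrightarrow> 1 + 2*NN + n \<le> d \<and> d \<le> 1 + 2*NN + n + W"
  unfolding realsD_def using kcc_le_W by auto

lemma realsT_bounds: "y \<in> set realsT \<Longrightarrow> 3 + 2*NN \<le> y \<and> y \<le> 2 + 2*NN + n + W"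
proof -
  assume "y \<in> set realsT"
  then obtain j where j: "j < n" "y = 2 + 2*NN + n + kcc (rank (n+j)) - j" unfolding realsT_def by auto
  have "rank (n+j) < 2*n" using rank_lt j by simp
  hence kw: "kcc (rank (n+j)) \<le> W" by (rule kcc_le_W)
  have "y + j = 2 + 2*NN + n + kcc (rank (n+j))" using j by simp
  thus ?thesis using kw j by linarith
qed

lemma LL_pos: "0 < LL" by (simp add: LL_def)

lemma NN_eq: "NN = n*n + n" by (simp add: NN_def K_def)

lemma disc_Dl: "discretize (map int Dl) = map (\<lambda>j. int (j+2)) [0..<NN] @ map (\<lambda>q. int VV - int LL + 1 + int q) [0..<LL]"
proof -
  define xs where "xs = map int (map Suc fillc @ realsD)"
  have Dl: "map int Dl = xs @ replicate LL (int VV)" unfolding xs_def Dl_def by simp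
  obtain L' where L': "LL = Suc L'" using LL_pos gr0_implies_Suc by blast
  have dr: "discretize (replicate LL (int VV)) = map (\<lambda>q. int VV - int LL + 1 + int q) [0..<LL]" by (rule disc_rep)
  have h: "discretize (replicate LL (int VV)) = (int VV - int LL + 1) # map (\<lambda>q. int VV - int LL + 1 + int (Suc q)) [0..<L']"
    using dr unfolding L' by (simp del: upt_Suc add: map_upt_Suc)
  have lxs: "length xs = NN" unfolding xs_def using len_fillc len_realsD NN_eq by simp
  have hv: "int VV - int LL + 1 = int (NN + 2)" by (simp add: VV_def)
  have cond: "\<forall>j<length xs. int VV - int LL + 1 - int (length xs - j) \<le> xs!j"
  proof (intro allI impI)
    fix j assume j: "j < length xs"
    have "int (j + 2) \<le> xs!j"
    proof (cases "j < n*n")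
      case True
      hence "xs!j = int (Suc (fillc!j))" unfolding xs_def using len_fillc by (simp add: nth_append)
      moreover have "j + 1 \<le> fillc!j" using fillc_nth True len_fillc by simp
      ultimately show ?thesis by simp
    next
      case False
      hence jj: "j - n*n < length realsD" using j lxs len_realsD NN_eq by simp
      hence "xs!j = int (realsD!(j - n*n))" unfolding xs_def using len_fillc False by (simp add: nth_append)
      moreover have "1 + 2*NN + n \<le> realsD!(j - n*n)" using realsD_bounds jj nth_mem by blast
      ultimately show ?thesis using j lxs by simp
    qed
    thus "int VV - int LL + 1 - int (length xs - j) \<le> xs!j" using hv j lxs by simp
  qed
  have "discretize (map int Dl) = map (\<lambda>j. int VV - int LL + 1 - int (length xs - j)) [0..<length xs] @ discretize (replicate LL (int VV))"
    unfolding Dl by (rule disc_app[OF h cond])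
  also have "map (\<lambda>j. int VV - int LL + 1 - int (length xs - j)) [0..<length xs] = map (\<lambda>j. int (j+2)) [0..<NN]"
    using lxs hv by (intro map_cong) auto
  finally show ?thesis using dr by simp
qed

lemma mset_XA: "mset (map (\<lambda>j. int (j+2)) [0..<NN]) = mset (map int (map Suc fillc)) + mset (map int XR)"
proof -
  define g where "g = (\<lambda>c. int (Suc c))"
  have u: "[1..<NN+1] = map Suc [0..<NN]" by (simp only: map_Suc_upt) simp
  have eq: "map (\<lambda>j. int (j+2)) [0..<NN] = map g [1..<NN+1]"
    unfolding u g_def by (simp add: comp_def)
  have "mset (map (\<lambda>j. int (j+2)) [0..<NN]) = mset (map g (filter (\<lambda>c. c mod K \<noteq> 0) [1..<NN+1])) +
       mset (map g (filter (\<lambda>c. \<not> c mod K \<noteq> 0) [1..<NN+1]))"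
    unfolding eq by (rule mset_map_filter_split)
  also have "filter (\<lambda>c. \<not> c mod K \<noteq> 0) [1..<NN+1] = map (\<lambda>b. K*(b+1)) [0..<n]"
    using multK by simp
  also have "map g (map (\<lambda>b. K*(b+1)) [0..<n]) = map int XR" unfolding g_def XR_def by simp
  also have "map g (filter (\<lambda>c. c mod K \<noteq> 0) [1..<NN+1]) = map int (map Suc fillc)"
    unfolding g_def fillc_def by simp
  finally show ?thesis .
qed

lemma pm_MF: "pos_match Dl Tl \<longleftrightarrow> MF (\<lambda>d x y. y \<le> d + x) (map int realsD) (map int XR) (map int realsT)"
proof -
  have VL: "int VV - int LL = int (NN + 1)" by (simp add: VV_def)
  have "pos_match Dl Tl \<longleftrightarrow> PMm (map int Dl) (discretize (map int Dl)) (map int Tl)" by (rule pos_match_PMm)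
  also have "\<dots> \<longleftrightarrow> MF (\<lambda>d x y. y \<le> d + x) (map int realsD) (map int XR) (map int realsT)"
  proof (rule forcing[where F="map int (map Suc fillc)" and XA="map (\<lambda>j. int (j+2)) [0..<NN]"
        and V="int VV" and L=LL and Fb="int (NN+1)"])
    show "map int Dl = map int (map Suc fillc) @ map int realsD @ replicate LL (int VV)"
      unfolding Dl_def by simp
    show "discretize (map int Dl) = map (\<lambda>j. int (j+2)) [0..<NN] @ map (\<lambda>q. int VV - int LL + 1 + int q) [0..<LL]"
      by (rule disc_Dl)
    show "mset (map (\<lambda>j. int (j+2)) [0..<NN]) = mset (map int (map Suc fillc)) + mset (map int XR)"
      by (rule mset_XA)
    have "2*VV \<ge> LL" by (simp add: VV_def)
    thus "map int Tl = map int realsT @ map (\<lambda>f. 2*f) (map int (map Suc fillc)) @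
        map (\<lambda>q. 2 * int VV - int LL + 1 + int q) [0..<LL]"
      unfolding Tl_def by (simp add: of_nat_diff)
    show "\<forall>f\<in>set (map int (map Suc fillc)). f \<le> int (NN + 1)" using fillc_props by auto
    show "\<forall>d\<in>set (map int realsD). int (NN + 1) < d"
    proof
      fix d assume "d \<in> set (map int realsD)"
      then obtain d' where d': "d' \<in> set realsD" "d = int d'" by auto
      hence n0: "1 \<le> n" using len_realsD by (cases n) auto
      have "1 + 2*NN + n \<le> d'" using realsD_bounds[OF d'(1)] by simp
      hence "NN + 1 < d'" using n0 by linarith
      thus "int (NN + 1) < d" using d'(2) by simp
    qed
    show "\<forall>y\<in>set (map int realsT). 2 * int (NN + 1) < y \<and> y \<le> 2 * int VV - int LL"
    proof
      fix y assume "y \<in> set (map int realsT)"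
      then obtain y' where y': "y' \<in> set realsT" "y = int y'" by auto
      have "3 + 2*NN \<le> y' \<and> y' \<le> 2 + 2*NN + n + W" using realsT_bounds[OF y'(1)] .
      moreover have "2 * int VV - int LL = int (4*NN + 2*n + 2*W + 4)" by (simp add: VV_def LL_def)
      ultimately show "2 * int (NN + 1) < y \<and> y \<le> 2 * int VV - int LL" using y'(2) by simp
    qed
    show "\<forall>d\<in>set (map int (map Suc fillc)) \<union> set (map int realsD). 2 * d \<le> 2 * int VV - int LL"
    proof
      fix d assume dd: "d \<in> set (map int (map Suc fillc)) \<union> set (map int realsD)"
      have "\<exists>d'. d' \<le> 1 + 2*NN + n + W \<and> d = int d'"
      proof (cases "d \<in> set (map int (map Suc fillc))")
        case True
        then obtain c where c: "c \<in> set fillc" "d = int (Suc c)" by auto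
        thus ?thesis using fillc_props[OF c(1)] by (intro exI[of _ "Suc c"]) simp
      next
        case False
        hence "d \<in> set (map int realsD)" using dd by simp
        then obtain d' where "d' \<in> set realsD" "d = int d'" by auto
        thus ?thesis using realsD_bounds by blast
      qed
      then obtain d' where d': "d' \<le> 1 + 2*NN + n + W" "d = int d'" by blast
      moreover have "2 * int VV - int LL = int (4*NN + 2*n + 2*W + 4)" by (simp add: VV_def LL_def)
      ultimately show "2 * d \<le> 2 * int VV - int LL" by simp
    qed
    show "\<forall>x\<in>set (map (\<lambda>j. int (j+2)) [0..<NN]). x \<le> int VV - int LL" using VL by auto
    show "\<forall>x\<in>set (map int XR). \<forall>d\<in>set (map int realsD). x \<le> d"
    proof (intro ballI)
      fix x d assume x: "x \<in> set (map int XR)" and d: "d \<in> set (map int realsD)"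
      then obtain b where b: "b < n" "x = int (1 + K*(b+1))" unfolding XR_def by auto
      have "K*(b+1) \<le> K*n" using b by (intro mult_le_mono2) simp
      hence "1 + K*(b+1) \<le> 1 + NN" by (simp add: NN_def mult.commute)
      hence "x \<le> int (1 + NN)" by (simp only: b(2) of_nat_le_iff)
      moreover obtain d' where "d' \<in> set realsD" "d = int d'" using d by auto
      moreover have "1 + 2*NN + n \<le> d'" using realsD_bounds \<open>d' \<in> set realsD\<close> by blast
      ultimately show "x \<le> d" by simp
    qed
  qed
  finally show ?thesis .
qed

theorem reduction_correct: "in3dm a t \<longleftrightarrow> pos_match Dl Tl"
proof -
  have "mset (map int realsD) = mset (map int realsA)" using mset_realsD by (simp only: mset_map)
  hence "MF (\<lambda>d x y. y \<le> d + x) (map int realsD) (map int XR) (map int realsT) =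
         MF (\<lambda>d x y. y \<le> d + x) (map int realsA) (map int XR) (map int realsT)"
    by (intro MF_cong) simp_all
  thus ?thesis using step_LF pm_MF by simp
qed

end

context inst begin

lemma realsD_lb: "d \<in> set realsD \<Longrightarrow> 1 + 2*NN + n \<le> d" using realsD_bounds by blast
lemma realsD_ub: "d \<in> set realsD \<Longrightarrow> d \<le> 1 + 2*NN + n + W" using realsD_bounds by blast

lemma len_Dl: "length Dl = n*n + n + LL" unfolding Dl_def using len_fillc len_realsD by simp
lemma len_Tl: "length Tl = n*n + n + LL" unfolding Tl_def realsT_def using len_fillc by simp

lemma sorted_Dl: "sorted Dl"
proof -
  have s1: "sorted (map Suc fillc)"
    using fillc_sorted by (simp add: sorted_map strict_sorted_imp_sorted)
  have "sorted (map (\<lambda>r. 1 + 2*NN + n + kcc r) [0..<2*n])"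
    by (rule sorted_map_upt_mono) (simp add: kcc_mono)
  hence s2: "sorted realsD" unfolding realsD_def by (rule sorted_filter)
  have c1: "\<forall>x\<in>set (map Suc fillc). \<forall>y\<in>set (realsD @ replicate LL VV). x \<le> y"
  proof (intro ballI)
    fix x y assume x: "x \<in> set (map Suc fillc)" and y: "y \<in> set (realsD @ replicate LL VV)"
    have "x \<le> NN + 1" using x fillc_props by auto
    moreover have "NN + 1 \<le> y" using y realsD_lb by (fastforce simp: VV_def)
    ultimately show "x \<le> y" by simp
  qed
  have c2: "\<forall>x\<in>set realsD. \<forall>y\<in>set (replicate LL VV). x \<le> y"
    using realsD_ub by (fastforce simp: VV_def LL_def)
  show ?thesis unfolding Dl_def using s1 s2 c1 c2 by (simp add: sorted_append)
qed

lemma pos_Dl: "\<forall>d\<in>set Dl. 0 < d"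
  unfolding Dl_def using realsD_lb by (fastforce simp: VV_def)

lemma distinct_realsT: "distinct realsT"
proof -
  have "inj_on (\<lambda>j. 2 + 2*NN + n + kcc (rank (n+j)) - j) {0..<n}"
  proof (rule inj_onI)
    fix j1 j2 assume j1: "j1 \<in> {0..<n}" and j2: "j2 \<in> {0..<n}"
      and e: "2 + 2*NN + n + kcc (rank (n+j1)) - j1 = 2 + 2*NN + n + kcc (rank (n+j2)) - j2"
    obtain c1 where c1: "kcc (rank (n+j1)) = K*c1" using kcc_mult by blast
    obtain c2 where c2: "kcc (rank (n+j2)) = K*c2" using kcc_mult by blast
    have "K*c1 + j2 = K*c2 + j1" using e j1 j2 c1 c2 by auto
    moreover have "j1 < K" "j2 < K" using j1 j2 by (auto simp: K_def)
    ultimately show "j1 = j2" by (rule mod_cancel_aux)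
  qed
  thus ?thesis unfolding realsT_def by (simp add: distinct_map)
qed

lemma distinct_Tl: "distinct Tl"
proof -
  have d2: "distinct (map (\<lambda>c. 2 + 2*c) fillc)"
    unfolding fillc_def by (simp add: distinct_map inj_on_def)
  have d3: "distinct (map (\<lambda>q. 2*VV - LL + 1 + q) [0..<LL])" by (simp add: distinct_map inj_on_def)
  have b2: "\<forall>y\<in>set (map (\<lambda>c. 2 + 2*c) fillc). y \<le> 2 + 2*NN" using fillc_props by auto
  have b3: "\<forall>y\<in>set (map (\<lambda>q. 2*VV - LL + 1 + q) [0..<LL]). 3 + 2*NN + n + W \<le> y"
    by (auto simp: VV_def LL_def)
  have "set realsT \<inter> set (map (\<lambda>c. 2 + 2*c) fillc @ map (\<lambda>q. 2*VV - LL + 1 + q) [0..<LL]) = {}"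
  proof -
    { fix y assume y: "y \<in> set realsT" "y \<in> set (map (\<lambda>c. 2 + 2*c) fillc @ map (\<lambda>q. 2*VV - LL + 1 + q) [0..<LL])"
      have "3 + 2*NN \<le> y \<and> y \<le> 2 + 2*NN + n + W" using realsT_bounds y(1) .
      hence False using y(2) b2 b3 by fastforce }
    thus ?thesis by blast
  qed
  moreover have "set (map (\<lambda>c. 2 + 2*c) fillc) \<inter> set (map (\<lambda>q. 2*VV - LL + 1 + q) [0..<LL]) = {}"
    using b2 b3 by fastforce
  ultimately show ?thesis unfolding Tl_def using distinct_realsT d2 d3 by (simp add: distinct_map inj_on_def)
qed

lemma pos_Tl: "\<forall>x\<in>set Tl. 0 < x"
proof -
  have "\<forall>x\<in>set realsT. 0 < x" using realsT_bounds by fastforce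
  thus ?thesis unfolding Tl_def by auto
qed

theorem pm_inst_ok: "pm_inst Dl Tl"
  unfolding pm_inst_def using len_Dl len_Tl sorted_Dl pos_Dl distinct_Tl pos_Tl by simp

end

definition hoareT :: "((nat \<Rightarrow> nat) \<Rightarrow> bool) \<Rightarrow> com \<Rightarrow> nat \<Rightarrow> ((nat \<Rightarrow> nat) \<Rightarrow> bool) \<Rightarrow> bool" where
  "hoareT P c T Q \<longleftrightarrow> (\<forall>m. P m \<longrightarrow> (\<exists>k m'. big_step c m k m' \<and> k \<le> T \<and> Q m'))"

lemma hT_assign:
  assumes "\<And>m. P m \<Longrightarrow> Q (m(aval x m := aval e m))"
  shows "hoareT P (Assign x e) 1 Q"
  unfolding hoareT_def using assms big_step.Assign by blast

lemma hT_assign_wp: "hoareT (\<lambda>m. Q (m(aval x m := aval e m))) (Assign x e) 1 Q"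
  by (rule hT_assign) simp

lemma hT_seq_bw:
  assumes "hoareT Q c2 T2 R" "hoareT P c1 T1 Q"
  shows "hoareT P (Seq c1 c2) (T1 + T2) R"
  unfolding hoareT_def
proof (intro allI impI)
  fix m assume "P m"
  then obtain k1 m1 where 1: "big_step c1 m k1 m1" "k1 \<le> T1" "Q m1" using assms(2) unfolding hoareT_def by blast
  then obtain k2 m2 where 2: "big_step c2 m1 k2 m2" "k2 \<le> T2" "R m2" using assms(1) unfolding hoareT_def by blast
  show "\<exists>k m'. big_step (Seq c1 c2) m k m' \<and> k \<le> T1 + T2 \<and> R m'"
    using big_step.Seq[OF 1(1) 2(1)] 1(2) 2(2) 2(3) by (intro exI conjI) auto
qed

lemma hT_if_wp:
  assumes "hoareT P1 c1 T1 Q" "hoareT P2 c2 T2 Q"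
  shows "hoareT (\<lambda>m. if aval b m \<noteq> 0 then P1 m else P2 m) (If b c1 c2) (Suc (max T1 T2)) Q"
  unfolding hoareT_def
proof (intro allI impI)
  fix m assume P: "if aval b m \<noteq> 0 then P1 m else P2 m"
  show "\<exists>k m'. big_step (If b c1 c2) m k m' \<and> k \<le> Suc (max T1 T2) \<and> Q m'"
  proof (cases "aval b m = 0")
    case True
    then obtain k m' where "big_step c2 m k m'" "k \<le> T2" "Q m'" using assms(2) P unfolding hoareT_def by auto
    thus ?thesis using big_step.IfF[OF True] by fastforce
  next
    case False
    then obtain k m' where "big_step c1 m k m'" "k \<le> T1" "Q m'" using assms(1) P unfolding hoareT_def by auto
    thus ?thesis using big_step.IfT[OF False] by fastforce
  qed
qed

lemma hT_skip: "hoareT P SKIP 1 P"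
  unfolding hoareT_def using big_step.Skip by blast

lemma hT_seq:
  assumes "hoareT P c1 T1 Q" "hoareT Q c2 T2 R"
  shows "hoareT P (Seq c1 c2) (T1 + T2) R"
  unfolding hoareT_def
proof (intro allI impI)
  fix m assume "P m"
  then obtain k1 m1 where 1: "big_step c1 m k1 m1" "k1 \<le> T1" "Q m1" using assms(1) unfolding hoareT_def by blast
  then obtain k2 m2 where 2: "big_step c2 m1 k2 m2" "k2 \<le> T2" "R m2" using assms(2) unfolding hoareT_def by blast
  show "\<exists>k m'. big_step (Seq c1 c2) m k m' \<and> k \<le> T1 + T2 \<and> R m'"
    using big_step.Seq[OF 1(1) 2(1)] 1(2) 2(2) 2(3) by (intro exI conjI) auto
qed

lemma hT_if:
  assumes "hoareT (\<lambda>m. P m \<and> aval b m \<noteq> 0) c1 T Q" "hoareT (\<lambda>m. P m \<and> aval b m = 0) c2 T Q"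
  shows "hoareT P (If b c1 c2) (Suc T) Q"
  unfolding hoareT_def
proof (intro allI impI)
  fix m assume P: "P m"
  show "\<exists>k m'. big_step (If b c1 c2) m k m' \<and> k \<le> Suc T \<and> Q m'"
  proof (cases "aval b m = 0")
    case True
    then obtain k m' where "big_step c2 m k m'" "k \<le> T" "Q m'" using assms(2) P unfolding hoareT_def by blast
    thus ?thesis using big_step.IfF[OF True] by fastforce
  next
    case False
    then obtain k m' where "big_step c1 m k m'" "k \<le> T" "Q m'" using assms(1) P unfolding hoareT_def by blast
    thus ?thesis using big_step.IfT[OF False] by fastforce
  qed
qed

lemma hT_conseq:
  assumes "hoareT P c T Q" "\<And>m. P' m \<Longrightarrow> P m" "\<And>m. Q m \<Longrightarrow> Q' m" "T \<le> T'"
  shows "hoareT P' c T' Q'"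
  using assms unfolding hoareT_def by (meson le_trans)

lemma hT_pre:
  assumes "hoareT P c T Q" "\<And>m. P' m \<Longrightarrow> P m"
  shows "hoareT P' c T Q"
  using assms unfolding hoareT_def by meson

lemma hT_post:
  assumes "hoareT P c T Q" "\<And>m. Q m \<Longrightarrow> Q' m"
  shows "hoareT P c T Q'"
  using assms unfolding hoareT_def by meson

lemma hT_time:
  assumes "hoareT P c T Q" "T \<le> T'"
  shows "hoareT P c T' Q"
  using assms unfolding hoareT_def by (meson le_trans)

lemma hT_while:
  assumes body: "\<And>j. j < J \<Longrightarrow> hoareT (I j) c T (I (Suc j))"
  and ct: "\<And>j m. j < J \<Longrightarrow> I j m \<Longrightarrow> aval b m \<noteq> 0"
  and cf: "\<And>m. I J m \<Longrightarrow> aval b m = 0"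
  shows "hoareT (I 0) (While b c) (J * (T + 1) + 1) (I J)"
proof -
  have main: "\<forall>m. I (J - d) m \<longrightarrow> (\<exists>k m'. big_step (While b c) m k m' \<and> k \<le> d * (T+1) + 1 \<and> I J m')"
    if "d \<le> J" for d
    using that
  proof (induction d)
    case 0
    show ?case
    proof (intro allI impI)
      fix m assume "I (J - 0) m"
      hence "I J m" by simp
      thus "\<exists>k m'. big_step (While b c) m k m' \<and> k \<le> 0 * (T+1) + 1 \<and> I J m'"
        using big_step.WhileF[OF cf] by fastforce
    qed
  next
    case (Suc d)
    show ?case
    proof (intro allI impI)
      fix m assume I: "I (J - Suc d) m"
      have j: "J - Suc d < J" using Suc.prems by simp
      have b: "aval b m \<noteq> 0" using ct[OF j I] .
      obtain k1 m1 where 1: "big_step c m k1 m1" "k1 \<le> T" "I (Suc (J - Suc d)) m1"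
        using body[OF j] I unfolding hoareT_def by blast
      have "Suc (J - Suc d) = J - d" using Suc.prems by simp
      hence "I (J - d) m1" using 1(3) by simp
      then obtain k2 m2 where 2: "big_step (While b c) m1 k2 m2" "k2 \<le> d * (T+1) + 1" "I J m2"
        using Suc.IH Suc.prems by auto
      have "big_step (While b c) m (Suc (k1 + k2)) m2" using big_step.WhileT[OF b 1(1) 2(1)] .
      moreover have "Suc (k1 + k2) \<le> Suc d * (T+1) + 1" using 1(2) 2(2) by simp
      ultimately show "\<exists>k m'. big_step (While b c) m k m' \<and> k \<le> Suc d * (T+1) + 1 \<and> I J m'"
        using 2(3) by blast
    qed
  qed
  show ?thesis unfolding hoareT_def using main[of J] by simp
qed

definition VA :: "nat \<Rightarrow> aexp" where "VA j = Plus (Mem (N 0)) (N j)"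
definition Vr :: "nat \<Rightarrow> aexp" where "Vr j = Mem (VA j)"
definition TWO :: aexp where "TWO = Plus (Vr 0) (Vr 0)"
definition PA :: "aexp \<Rightarrow> aexp" where "PA e = Plus (Plus (Mem (N 0)) (N 20)) e"
definition CA :: "aexp \<Rightarrow> aexp" where "CA e = Plus (Plus (Plus (Mem (N 0)) (N 20)) TWO) e"
definition TA :: "aexp \<Rightarrow> aexp" where "TA e = Plus (Plus (Plus (Mem (N 0)) (N 20)) (Plus TWO TWO)) e"
definition INP :: "aexp \<Rightarrow> aexp" where "INP e = Mem (Plus (N 1) e)"
definition OA :: "aexp \<Rightarrow> aexp" where "OA e = Plus (N 1) e"
definition inc :: "nat \<Rightarrow> com" where "inc j = Assign (VA j) (Plus (Vr j) (N 1))"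
definition TMA :: "nat \<Rightarrow> aexp" where "TMA j = Plus (Plus (Mem (N 0)) (Mem (N 0))) (N (Suc j))"
definition TM :: "nat \<Rightarrow> aexp" where "TM j = Mem (TMA j)"

lemma aval_VA[simp]: "aval (VA j) m = m 0 + j" by (simp add: VA_def)
lemma aval_Vr[simp]: "aval (Vr j) m = m (m 0 + j)" by (simp add: Vr_def)
lemma aval_TWO[simp]: "aval TWO m = 2 * m (m 0)" by (simp add: TWO_def)
lemma aval_PA[simp]: "aval (PA e) m = m 0 + 20 + aval e m" by (simp add: PA_def)
lemma aval_CA[simp]: "aval (CA e) m = m 0 + 20 + 2 * m (m 0) + aval e m" by (simp add: CA_def)
lemma aval_TA[simp]: "aval (TA e) m = m 0 + 20 + 4 * m (m 0) + aval e m" by (simp add: TA_def)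
lemma aval_INP[simp]: "aval (INP e) m = m (Suc (aval e m))" by (simp add: INP_def)
lemma aval_OA[simp]: "aval (OA e) m = Suc (aval e m)" by (simp add: OA_def)
lemma aval_TMA[simp]: "aval (TMA j) m = 2 * m 0 + Suc j" by (simp add: TMA_def)
lemma aval_TM[simp]: "aval (TM j) m = m (2 * m 0 + Suc j)" by (simp add: TM_def)

definition dbl :: com where "dbl = Assign (TMA 1) (Plus (TM 1) (TM 1))"
definition body1 :: com where
  "body1 = Seq dbl (Seq dbl (Seq dbl (Seq dbl (Seq dbl (Assign (TMA 0) (Plus (TM 0) (N 1)))))))"
definition init :: com where
  "init = Seq (Assign (TMA 0) (N 0)) (Seq (Assign (TMA 1) (N 1))
     (Seq (While (Minus (Plus (Mem (N 0)) (N 1)) (TM 0)) body1)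
     (Seq (Assign (TM 1) (Mem (N 0))) (Assign (N 0) (TM 1)))))"

definition p2 :: com where "p2 = Assign (VA 1) (Plus (Vr 0) (N 1))"
definition tbody :: com where
  "tbody = Seq (Assign (TA (Vr 3)) (Vr 5)) (Seq (Assign (VA 5) (Plus (Vr 5) (Vr 1))) (inc 3))"
definition p3 :: com where
  "p3 = Seq (Assign (VA 3) (N 0)) (Seq (Assign (VA 5) (N 0)) (While (Minus (Plus (Vr 1) (N 1)) (Vr 3)) tbody))"

context inst begin

definition B0 :: nat where "B0 = 32 ^ K"

lemma W_bound: "W \<le> 2 * K^3"
proof -
  have "W = (\<Sum>i<2*n - 1. K * min (gap i) K)" unfolding W_def kcc_def ..
  also have "\<dots> \<le> (\<Sum>i<2*n - 1. K * K)" by (intro sum_mono) simp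
  also have "\<dots> = (2*n - 1) * (K * K)" by simp
  also have "\<dots> \<le> (2 * K) * (K * K)" by (intro mult_le_mono1) (simp add: K_def)
  finally show ?thesis by (simp add: power3_eq_cube)
qed

lemma MM_bound: "MM \<le> 11 * K^3"
proof -
  have "MM = 3 * NN + 2*n + 2*W + 2" by (simp add: MM_def LL_def)
  also have "NN \<le> K * K" by (simp add: NN_def K_def)
  hence "3 * NN + 2*n + 2*W + 2 \<le> 3 * (K*K) + 2*K + 4*K^3 + 2" using W_bound by (simp add: K_def)
  also have "\<dots> \<le> 11 * K^3"
  proof -
    have k1: "1 \<le> K" by (simp add: K_def)
    have "K*K \<le> K^3" using k1 by (simp add: power3_eq_cube)
    moreover have "K \<le> K^3" using k1 by (simp add: power3_eq_cube)
    moreover have "1 \<le> K^3" using k1 by simp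
    ultimately show ?thesis by linarith
  qed
  finally show ?thesis .
qed

lemma pow32_bound: "1 \<le> k \<Longrightarrow> 22 * k^3 + 2*k + 4 \<le> 32 ^ k"
proof (induction k rule: dec_induct)
  case base thus ?case by simp
next
  case (step k)
  have "(Suc k)^3 \<le> 8 * k^3" using step(1)
  proof -
    have "Suc k \<le> 2 * k" using step(1) by simp
    hence "(Suc k)^3 \<le> (2*k)^3" by (rule power_mono) simp
    thus ?thesis by simp
  qed
  hence "22 * (Suc k)^3 + 2 * Suc k + 4 \<le> 32 * (22 * k^3 + 2*k + 4)" by simp
  also have "\<dots> \<le> 32 * 32^k" using step(3) by simp
  finally show ?case by simp
qed

lemma B0_big: "2 * MM + 2 * n + 4 \<le> B0"
proof -
  have "2 * MM + 2*n + 4 \<le> 22 * K^3 + 2*K + 4" using MM_bound by (simp add: K_def)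
  also have "\<dots> \<le> B0" unfolding B0_def by (rule pow32_bound) (simp add: K_def)
  finally show ?thesis .
qed

definition inp :: "(nat \<Rightarrow> nat) \<Rightarrow> bool" where "inp m \<longleftrightarrow> (\<forall>i<2*n. m (Suc i) = w!i)"

lemma enc_in_inp: "inp (enc_in a t)"
  unfolding inp_def enc_in_def w_def using len by (auto simp: nth_append)

lemma enc_in_0: "enc_in a t 0 = n" by (simp add: enc_in_def)

definition base :: "(nat \<Rightarrow> nat) \<Rightarrow> bool" where "base m \<longleftrightarrow> m 0 = B0 \<and> m B0 = n"

lemma B0_gt: "2*n + 4 \<le> B0" using B0_big by linarith
lemma B0_ne1: "B0 \<noteq> 2*n+2" using B0_gt by linarith
lemma B0_ne2: "B0 \<noteq> 2*n+1" using B0_gt by linarith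
lemma B0_ne3: "B0 \<noteq> 0" using B0_gt by linarith
lemma B0_ne4: "2*n < B0" using B0_gt by linarith
lemma B0_pow: "32 ^ Suc n = B0" by (simp add: B0_def K_def)

lemma init_ok: "hoareT (\<lambda>m. m 0 = n \<and> inp m) init (2 + ((n+1) * 7 + 1) + 2) (\<lambda>m. base m \<and> inp m)"
proof -
  define I where "I j m \<longleftrightarrow> m 0 = n \<and> inp m \<and> m (2*n+1) = j \<and> m (2*n+2) = 32^j" for j m
  have body: "hoareT (I j) body1 6 (I (Suc j))" for j
    unfolding body1_def dbl_def
    apply (rule hT_time, rule hT_pre, (rule hT_seq_bw hT_assign_wp)+)
    unfolding I_def inp_def by auto
  have loop: "hoareT (I 0) (While (Minus (Plus (Mem (N 0)) (N 1)) (TM 0)) body1) ((n+1) * (6+1) + 1) (I (n+1))"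
    apply (rule hT_while[where I=I and T=6])
    apply (rule body)
    by (auto simp: I_def)
  show ?thesis
    unfolding init_def
    apply (rule hT_time, rule hT_pre)
    apply (rule hT_seq_bw, rule hT_seq_bw, rule hT_seq_bw, rule hT_seq_bw)
    apply (rule hT_assign_wp, rule hT_assign_wp)
    apply (rule hT_post[OF loop])
    subgoal for m
      using B0_ne1 B0_ne3 B0_ne4 B0_pow unfolding I_def base_def inp_def by auto
    apply (rule hT_assign_wp, rule hT_assign_wp)
    subgoal for m unfolding I_def inp_def by auto
    by simp
qed


definition S2 :: "(nat \<Rightarrow> nat) \<Rightarrow> bool" where "S2 m \<longleftrightarrow> base m \<and> inp m \<and> m (B0+1) = K"

lemma p2_ok: "hoareT (\<lambda>m. base m \<and> inp m) p2 1 S2"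
  unfolding p2_def
  apply (rule hT_pre[OF hT_assign_wp])
  using B0_ne4 by (auto simp: S2_def base_def inp_def K_def)

definition tab :: "(nat \<Rightarrow> nat) \<Rightarrow> bool" where "tab m \<longleftrightarrow> (\<forall>g\<le>K. m (B0 + 20 + 4*n + g) = K*g)"

lemma p3_ok: "hoareT S2 p3 (2 + ((K+1) * 4 + 1)) (\<lambda>m. S2 m \<and> tab m)"
proof -
  define I where "I j m \<longleftrightarrow> S2 m \<and> m (B0+3) = j \<and> m (B0+5) = K*j \<and> (\<forall>g<j. m (B0 + 20 + 4*n + g) = K*g)" for j m
  have body: "hoareT (I j) tbody 3 (I (Suc j))" for j
    unfolding tbody_def inc_def
    apply (rule hT_time, rule hT_pre, (rule hT_seq_bw hT_assign_wp)+)
    using B0_ne4 unfolding I_def S2_def base_def inp_def by (auto simp: less_Suc_eq)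
  have loop: "hoareT (I 0) (While (Minus (Plus (Vr 1) (N 1)) (Vr 3)) tbody) ((K+1) * (3+1) + 1) (I (K+1))"
    apply (rule hT_while[where I=I and T=3])
    apply (rule body)
    by (auto simp: I_def S2_def base_def)
  show ?thesis
    unfolding p3_def
    apply (rule hT_time, rule hT_pre)
    apply (rule hT_seq_bw, rule hT_seq_bw)
    apply (rule hT_post[OF loop])
    subgoal for m unfolding I_def tab_def by auto
    apply (rule hT_assign_wp, rule hT_assign_wp)
    subgoal for m using B0_ne4 unfolding I_def S2_def base_def inp_def by auto
    by simp
qed

end

definition ibody :: com where
  "ibody = Seq (If (Minus (INP (Vr 2)) (INP (Vr 3))) (inc 4)
                 (If (Minus (Vr 2) (Vr 3)) (If (Minus (INP (Vr 3)) (INP (Vr 2))) SKIP (inc 4)) SKIP))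
             (inc 3)"
definition iloop :: com where "iloop = While (Minus TWO (Vr 3)) ibody"
definition obody :: com where
  "obody = Seq (Assign (VA 4) (N 0)) (Seq (Assign (VA 3) (N 0)) (Seq iloop (Seq (Assign (PA (Vr 4)) (Vr 2)) (inc 2))))"
definition p4 :: com where "p4 = Seq (Assign (VA 2) (N 0)) (While (Minus TWO (Vr 2)) obody)"

definition passbody :: com where
  "passbody = Seq (Assign (VA 6) (Minus (INP (Mem (PA (Vr 3)))) (INP (Mem (PA (Minus (Vr 3) (N 1)))))))
     (Seq (If (Minus (Vr 1) (Vr 6)) (Assign (VA 5) (Plus (Vr 5) (Mem (TA (Vr 6)))))
                                     (Assign (VA 5) (Plus (Vr 5) (Mem (TA (Vr 1))))))
     (Seq (Assign (CA (Vr 3)) (Vr 5)) (inc 3)))"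
definition p5 :: com where
  "p5 = Seq (Assign (VA 5) (N 0)) (Seq (Assign (CA (N 0)) (N 0)) (Seq (Assign (VA 3) (N 1))
        (Seq (While (Minus TWO (Vr 3)) passbody) (Assign (VA 14) (Vr 5)))))"

context inst begin

definition S3 :: "(nat \<Rightarrow> nat) \<Rightarrow> bool" where "S3 m \<longleftrightarrow> S2 m \<and> tab m"

definition Ok :: "nat \<Rightarrow> (nat \<Rightarrow> nat) \<Rightarrow> bool" where
  "Ok k m \<longleftrightarrow> S3 m \<and> m (B0+2) = k \<and> (\<forall>k'<k. m (B0 + 20 + rank k') = k')"

definition Ik :: "nat \<Rightarrow> nat \<Rightarrow> (nat \<Rightarrow> nat) \<Rightarrow> bool" where
  "Ik k j m \<longleftrightarrow> Ok k m \<and> m (B0+3) = j \<and> m (B0+4) = length (filter (\<lambda>l. lexless l k) [0..<j])"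

lemma rank_bound: "k' < 2*n \<Longrightarrow> B0 + 20 + rank k' < B0 + 20 + 2*n"
  using rank_lt by simp

lemma ibody_ok:
  assumes "k < 2*n" "j < 2*n"
  shows "hoareT (Ik k j) ibody 5 (Ik k (Suc j))"
  unfolding ibody_def inc_def
  apply (rule hT_time, rule hT_pre, (rule hT_seq_bw hT_assign_wp hT_if_wp hT_skip)+)
  subgoal for m
    using assms B0_ne4 rank_lt unfolding Ik_def Ok_def S3_def S2_def base_def inp_def tab_def
    by (auto simp: lexless_def split: if_splits)
  by simp

lemma iloop_ok:
  assumes "k < 2*n"
  shows "hoareT (Ik k 0) iloop (2*n * (5+1) + 1) (Ik k (2*n))"
  unfolding iloop_def
  apply (rule hT_while[where I="Ik k" and T=5])
  apply (rule ibody_ok[OF assms], simp)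
  by (auto simp: Ik_def Ok_def S3_def S2_def base_def)

lemma rank_eq: "k1 < 2*n \<Longrightarrow> k2 < 2*n \<Longrightarrow> rank k1 = rank k2 \<Longrightarrow> k1 = k2"
  using rank_inj by (auto simp: inj_on_def)

lemma obody_post:
  assumes k: "k < 2*n" and I: "Ik k (2*n) m"
  shows "Ok (Suc k) (m(B0 + 20 + rank k := k, B0 + 2 := Suc k))"
proof -
  have rk: "rank k < 2*n" using rank_lt[OF k] .
  have f: "m 0 = B0" "m B0 = n" "inp m" "m (B0+1) = K" "tab m" "m (B0+2) = k"
     "\<forall>k'<k. m (B0 + 20 + rank k') = k'"
    using I unfolding Ik_def Ok_def S3_def S2_def base_def by auto
  define m' where "m' = m(B0 + 20 + rank k := k, B0 + 2 := Suc k)"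
  have "m' 0 = B0" "m' B0 = n" "m' (B0+1) = K" "m' (B0+2) = Suc k" using f by (simp_all add: m'_def)
  moreover have "inp m'" using f(3) B0_ne4 unfolding inp_def m'_def by auto
  moreover have "tab m'" using f(5) rk unfolding tab_def m'_def by auto
  moreover have "\<forall>k'<Suc k. m' (B0 + 20 + rank k') = k'"
  proof (intro allI impI)
    fix k' assume "k' < Suc k"
    show "m' (B0 + 20 + rank k') = k'"
    proof (cases "k' = k")
      case True thus ?thesis by (simp add: m'_def)
    next
      case False
      hence "k' < k" using \<open>k' < Suc k\<close> by simp
      hence "rank k' \<noteq> rank k" using rank_eq[of k' k] k by linarith
      thus ?thesis using f(7) \<open>k' < k\<close> by (simp add: m'_def)
    qed
  qed
  ultimately show ?thesis unfolding m'_def Ok_def S3_def S2_def base_def by simp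
qed

lemma obody_ok:
  assumes "k < 2*n"
  shows "hoareT (Ok k) obody (2*n * 6 + 5) (Ok (Suc k))"
  unfolding obody_def inc_def
  apply (rule hT_time, rule hT_pre)
  apply (rule hT_seq_bw, rule hT_seq_bw, rule hT_seq_bw, rule hT_seq_bw)
  apply (rule hT_assign_wp, rule hT_assign_wp)
  apply (rule hT_post[OF iloop_ok[OF assms]])
  subgoal premises I for m
  proof -
    have e: "m 0 = B0" "m (B0+4) = rank k" "m (B0+2) = k"
      using I unfolding Ik_def Ok_def S3_def S2_def base_def rank_def by auto
    have ne: "B0 + 20 + rank k \<noteq> 0" "B0 + 20 + rank k \<noteq> B0 + 2" by simp_all
    show ?thesis using obody_post[OF assms I] e ne by simp
  qed
  apply (rule hT_assign_wp, rule hT_assign_wp)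
  subgoal for m
    using assms B0_ne4 rank_lt unfolding Ik_def Ok_def S3_def S2_def base_def inp_def tab_def
    by auto
  by simp

definition prm :: "(nat \<Rightarrow> nat) \<Rightarrow> bool" where "prm m \<longleftrightarrow> (\<forall>r<2*n. m (B0 + 20 + r) = perm r)"

lemma p4_ok: "hoareT S3 p4 (1 + (2*n * (2*n*6+5+1) + 1)) (\<lambda>m. S3 m \<and> prm m)"
proof -
  have loop: "hoareT (Ok 0) (While (Minus TWO (Vr 2)) obody) (2*n * (2*n*6+5+1) + 1) (Ok (2*n))"
    apply (rule hT_while[where I=Ok and T="2*n*6+5"])
    apply (rule obody_ok, simp)
    by (auto simp: Ok_def S3_def S2_def base_def)
  show ?thesis
    unfolding p4_def
    apply (rule hT_seq_bw)
    apply (rule hT_post[OF loop])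
    subgoal for m unfolding Ok_def prm_def using perm_lt rank_perm by metis
    apply (rule hT_pre[OF hT_assign_wp])
    subgoal for m using B0_ne4 unfolding Ok_def S3_def S2_def base_def inp_def tab_def by auto
    done
qed


definition S4 :: "(nat \<Rightarrow> nat) \<Rightarrow> bool" where "S4 m \<longleftrightarrow> S3 m \<and> prm m"

definition Ip :: "nat \<Rightarrow> (nat \<Rightarrow> nat) \<Rightarrow> bool" where
  "Ip j m \<longleftrightarrow> S4 m \<and> m (B0+3) = Suc j \<and> m (B0+5) = kcc j \<and> (\<forall>i\<le>j. m (B0 + 20 + 2*n + i) = kcc i)"

lemma gap_eq: "Suc j < 2*n \<Longrightarrow> w ! perm (Suc j) - w ! perm j = gap j"
  by (simp add: gap_def ws_def)

lemma passbody_ok: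
  assumes "j < 2*n - 1"
  shows "hoareT (Ip j) passbody 5 (Ip (Suc j))"
  unfolding passbody_def inc_def
  apply (rule hT_time, rule hT_pre, (rule hT_seq_bw hT_assign_wp hT_if_wp hT_skip)+)
  subgoal for m
  proof -
    assume I: "Ip j m"
    have sj: "Suc j < 2*n" using assms by simp
    have f: "m 0 = B0" "m B0 = n" "inp m" "m (B0+1) = K" "tab m" "prm m" "m (B0+3) = Suc j"
       "m (B0+5) = kcc j" "\<forall>i\<le>j. m (B0 + 20 + 2*n + i) = kcc i"
      using I unfolding Ip_def S4_def S3_def S2_def base_def by auto
    have p1: "m (B0 + 20 + Suc j) = perm (Suc j)" "m (B0 + 20 + j) = perm j"
      using f(6) sj unfolding prm_def by auto
    have w1: "m (Suc (perm (Suc j))) = w ! perm (Suc j)" "m (Suc (perm j)) = w ! perm j"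
      using f(3) perm_lt sj unfolding inp_def by auto
    have g: "w ! perm (Suc j) - w ! perm j = gap j" using gap_eq[OF sj] .
    have t1: "gap j < K \<Longrightarrow> m (B0 + 20 + 4*n + gap j) = K * gap j" using f(5) unfolding tab_def by simp
    have t2: "m (B0 + 20 + 4*n + K) = K * K" using f(5) unfolding tab_def by simp
    show ?thesis
      using f p1 w1 g t1 t2 sj B0_ne4
      unfolding Ip_def S4_def S3_def S2_def base_def inp_def tab_def prm_def
      by (auto simp: kcc_Suc le_Suc_eq min_def split: if_splits)
  qed
  by simp


definition kc :: "(nat \<Rightarrow> nat) \<Rightarrow> bool" where "kc m \<longleftrightarrow> (\<forall>r<2*n. m (B0 + 20 + 2*n + r) = kcc r)"

definition S5 :: "(nat \<Rightarrow> nat) \<Rightarrow> bool" where "S5 m \<longleftrightarrow> S4 m \<and> kc m \<and> m (B0+14) = W"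

lemma p5_ok: "hoareT S4 p5 (3 + ((2*n - 1) * 6 + 1) + 1) S5"
proof -
  have loop: "hoareT (Ip 0) (While (Minus TWO (Vr 3)) passbody) ((2*n - 1) * (5+1) + 1) (Ip (2*n - 1))"
    apply (rule hT_while[where I=Ip and T=5])
    apply (rule passbody_ok, simp)
    by (auto simp: Ip_def S4_def S3_def S2_def base_def)
  show ?thesis
    unfolding p5_def
    apply (rule hT_time, rule hT_pre)
    apply (rule hT_seq_bw, rule hT_seq_bw, rule hT_seq_bw, rule hT_seq_bw)
    apply (rule hT_assign_wp)
    apply (rule hT_post[OF loop])
    subgoal for m
      using B0_ne4 unfolding Ip_def S5_def S4_def S3_def S2_def base_def inp_def tab_def prm_def kc_def W_def
      by auto
    apply (rule hT_assign_wp, rule hT_assign_wp, rule hT_assign_wp)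
    subgoal for m
      using B0_ne4 unfolding Ip_def S4_def S3_def S2_def base_def inp_def tab_def prm_def
      by (auto simp: kcc_def)
    by simp
qed

end

definition p6 :: com where
  "p6 = Seq (Assign (VA 7) (Mem (TA (Vr 0))))
       (Seq (Assign (VA 8) (Plus (Plus (Plus (Plus (Vr 7) (Vr 0)) (Vr 14)) (N 1)) (Plus (Plus (Plus (Vr 7) (Vr 0)) (Vr 14)) (N 1))))
       (Seq (Assign (VA 9) (Plus (Plus (Vr 8) (Vr 7)) (N 1)))
            (Assign (VA 10) (Plus (Vr 7) (Vr 8)))))"

definition fbody :: com where
  "fbody = Seq (inc 12) (Seq (inc 13) (If (Minus (Vr 1) (Vr 13))
      (Seq (Assign (OA (Vr 11)) (Plus (Vr 12) (N 1)))
         (Seq (Assign (OA (Plus (Plus (Vr 10) (Vr 0)) (Vr 11))) (Plus (Plus (Vr 12) (Vr 12)) (N 2))) (inc 11)))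
      (Assign (VA 13) (N 0))))"

definition p7 :: com where
  "p7 = Seq (Assign (VA 11) (N 0)) (Seq (Assign (VA 12) (N 0)) (Seq (Assign (VA 13) (N 0))
        (While (Minus (Vr 7) (Vr 12)) fbody)))"

definition AB :: aexp where "AB = Plus (Plus (Plus (N 1) (Vr 7)) (Vr 7)) (Vr 0)"
definition TB :: aexp where "TB = Plus (Plus (Plus (N 2) (Vr 7)) (Vr 7)) (Vr 0)"
definition rbody :: com where
  "rbody = Seq (Assign (VA 2) (Mem (PA (Vr 3))))
     (Seq (If (Minus (Vr 0) (Vr 2))
              (Seq (Assign (OA (Vr 11)) (Plus AB (Mem (CA (Vr 3))))) (inc 11))
              (Assign (OA (Plus (Vr 10) (Minus (Vr 2) (Vr 0)))) (Minus (Plus TB (Mem (CA (Vr 3)))) (Minus (Vr 2) (Vr 0)))))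
     (inc 3))"
definition p8 :: com where "p8 = Seq (Assign (VA 3) (N 0)) (While (Minus TWO (Vr 3)) rbody)"

context inst begin

definition PR :: "(nat \<Rightarrow> nat) \<Rightarrow> bool" where
  "PR m \<longleftrightarrow> m 0 = B0 \<and> m B0 = n \<and> m (B0+1) = K \<and> prm m \<and> kc m \<and>
     m (B0+7) = NN \<and> m (B0+8) = LL \<and> m (B0+9) = VV \<and> m (B0+10) = MM"

lemma p6_ok: "hoareT S5 p6 4 PR"
  unfolding p6_def
  apply (rule hT_time, rule hT_pre, (rule hT_seq_bw hT_assign_wp)+)
  subgoal premises I for m
  proof -
    have f: "m 0 = B0" "m B0 = n" "m (B0+1) = K" "tab m" "prm m" "kc m" "m (B0+14) = W"
      using I unfolding S5_def S4_def S3_def S2_def base_def by auto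
    have t: "m (B0 + 20 + 4*n + n) = NN" using f(4) unfolding tab_def NN_def K_def
      by (metis le_SucI mult.commute order_refl)
    show ?thesis using f t unfolding PR_def prm_def kc_def
      by (simp add: LL_def VV_def MM_def algebra_simps)
  qed
  by simp

definition fp :: "nat \<Rightarrow> nat list" where "fp j = filter (\<lambda>c. c mod K \<noteq> 0) [1..<Suc j]"

definition If7 :: "nat \<Rightarrow> (nat \<Rightarrow> nat) \<Rightarrow> bool" where
  "If7 j m \<longleftrightarrow> PR m \<and> m (B0+12) = j \<and> m (B0+13) = j mod K \<and> m (B0+11) = length (fp j) \<and>
     (\<forall>i<length (fp j). m (Suc i) = Suc (fp j ! i) \<and> m (Suc (MM + n + i)) = 2 + 2 * (fp j ! i))"

lemma fp_Suc: "fp (Suc j) = fp j @ (if Suc j mod K \<noteq> 0 then [Suc j] else [])"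
  unfolding fp_def by simp

lemma len_fp: "length (fp j) \<le> j"
  unfolding fp_def by (metis length_filter_le length_upt diff_Suc_1)

lemma NN_le_MM: "NN \<le> MM" by (simp add: MM_def)
lemma NNn_le_MM: "NN + n \<le> MM" by (simp add: MM_def LL_def)

lemma out_lt: "2 * MM + 2 < B0" using B0_big by linarith

lemma fbody_ok:
  assumes j: "j < NN"
  shows "hoareT (If7 j) fbody 6 (If7 (Suc j))"
  unfolding fbody_def inc_def
  apply (rule hT_time, rule hT_pre, (rule hT_seq_bw hT_assign_wp hT_if_wp hT_skip)+)
  subgoal premises I for m
  proof -
    have f: "PR m" "m (B0+12) = j" "m (B0+13) = j mod K" "m (B0+11) = length (fp j)"
      "\<forall>i<length (fp j). m (Suc i) = Suc (fp j ! i) \<and> m (Suc (MM + n + i)) = 2 + 2 * (fp j ! i)"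
      using I unfolding If7_def by auto
    have pr: "m 0 = B0" "m B0 = n" "m (B0+1) = K" "m (B0+10) = MM"
      using f(1) unfolding PR_def by auto
    have lp: "length (fp j) < NN" using len_fp[of j] j by simp
    have bnd: "Suc (MM + n + length (fp j)) < B0" using lp out_lt NNn_le_MM by linarith
    have modK: "Suc j mod K = (if Suc (j mod K) = K then 0 else Suc (j mod K))" by (rule mod_Suc)
    have jk: "j mod K < K" using K_pos by simp
    show ?thesis
      using f pr lp bnd modK jk out_lt NN_le_MM
      unfolding If7_def PR_def prm_def kc_def
      by (auto simp: fp_Suc nth_append split: if_splits)
  qed
  by simp


definition FO :: "(nat \<Rightarrow> nat) \<Rightarrow> bool" where
  "FO m \<longleftrightarrow> (\<forall>i<n*n. m (Suc i) = Suc (fillc ! i) \<and> m (Suc (MM + n + i)) = 2 + 2 * (fillc ! i))"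

lemma p7_ok: "hoareT PR p7 (3 + (NN * 7 + 1)) (\<lambda>m. PR m \<and> m (B0+11) = n*n \<and> FO m)"
proof -
  have loop: "hoareT (If7 0) (While (Minus (Vr 7) (Vr 12)) fbody) (NN * (6+1) + 1) (If7 NN)"
    apply (rule hT_while[where I=If7 and T=6])
    apply (rule fbody_ok, simp)
    by (auto simp: If7_def PR_def)
  have fpNN: "fp NN = fillc" by (simp add: fp_def fillc_def)
  show ?thesis
    unfolding p7_def
    apply (rule hT_time, rule hT_pre)
    apply (rule hT_seq_bw, rule hT_seq_bw, rule hT_seq_bw)
    apply (rule hT_post[OF loop])
    subgoal for m using fpNN len_fillc unfolding If7_def FO_def by auto
    apply (rule hT_assign_wp, rule hT_assign_wp, rule hT_assign_wp)
    subgoal for m unfolding If7_def PR_def prm_def kc_def by (auto simp: fp_def)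
    by simp
qed

definition fr :: "nat \<Rightarrow> nat list" where "fr j = filter (\<lambda>r. perm r < n) [0..<j]"

definition Ir :: "nat \<Rightarrow> (nat \<Rightarrow> nat) \<Rightarrow> bool" where
  "Ir j m \<longleftrightarrow> PR m \<and> FO m \<and> m (B0+3) = j \<and> m (B0+11) = n*n + length (fr j) \<and>
     (\<forall>i<length (fr j). m (Suc (n*n + i)) = 1 + 2*NN + n + kcc (fr j ! i)) \<and>
     (\<forall>jj<n. rank (n+jj) < j \<longrightarrow> m (Suc (MM + jj)) = realsT ! jj)"

end

definition bbody :: com where
  "bbody = Seq (Assign (OA (Plus (Vr 7) (Vr 15))) (Vr 9))
     (Seq (Assign (OA (Plus (Plus (Vr 10) (Vr 7)) (Vr 15))) (Plus (Plus (Minus (Plus (Vr 9) (Vr 9)) (Vr 8)) (N 1)) (Vr 15)))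
     (inc 15))"
definition p9 :: com where "p9 = Seq (Assign (VA 15) (N 0)) (While (Minus (Vr 8) (Vr 15)) bbody)"
definition p10 :: com where "p10 = Assign (N 0) (Vr 10)"

context inst begin

lemma fr_Suc: "fr (Suc j) = fr j @ (if perm j < n then [j] else [])"
  unfolding fr_def by simp

lemma len_fr: "length (fr j) \<le> j"
  unfolding fr_def using length_filter_le[of _ "[0..<j]"] by simp

lemma nn2n_le_MM: "n*n + 2*n \<le> MM" by (simp add: MM_def LL_def NN_eq)

lemma rA_post:
  assumes j: "j < 2*n" and I: "Ir j m" and pj: "perm j < n"
  shows "Ir (Suc j) (m(B0+2 := perm j, Suc (n*n + length (fr j)) := Suc (NN + NN + n + kcc j),
                       B0+11 := Suc (n*n + length (fr j)), B0 + 3 := Suc j))"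
proof -
  define L where "L = length (fr j)"
  have f: "PR m" "FO m" "m (B0+3) = j" "m (B0+11) = n*n + L"
    "\<forall>i<L. m (Suc (n*n + i)) = 1 + 2*NN + n + kcc (fr j ! i)"
    "\<forall>jj<n. rank (n+jj) < j \<longrightarrow> m (Suc (MM + jj)) = realsT ! jj"
    using I unfolding Ir_def L_def by auto
  have lf: "L \<le> j" unfolding L_def by (rule len_fr)
  have mm: "n*n + 2*n \<le> MM" by (rule nn2n_le_MM)
  have ob: "2 * MM + 2 < B0" by (rule out_lt)
  define A where "A = Suc (n*n + L)"
  have A: "A < B0" "A \<noteq> 0" using lf mm ob j unfolding A_def by linarith+
  define m' where "m' = m(B0+2 := perm j, A := Suc (NN + NN + n + kcc j), B0+11 := Suc (n*n + L), B0 + 3 := Suc j)"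
  have u: "\<And>q. q \<noteq> B0+2 \<Longrightarrow> q \<noteq> A \<Longrightarrow> q \<noteq> B0+11 \<Longrightarrow> q \<noteq> B0+3 \<Longrightarrow> m' q = m q"
    unfolding m'_def by simp
  have "PR m'"
  proof -
    have "m' 0 = m 0" "m' B0 = m B0" "m' (B0+1) = m (B0+1)" "m' (B0+7) = m (B0+7)" "m' (B0+8) = m (B0+8)"
      "m' (B0+9) = m (B0+9)" "m' (B0+10) = m (B0+10)" using A by (auto intro!: u)
    moreover have "\<forall>r<2*n. m' (B0 + 20 + r) = m (B0 + 20 + r)" using A by (auto intro!: u)
    moreover have "\<forall>r<2*n. m' (B0 + 20 + 2*n + r) = m (B0 + 20 + 2*n + r)" using A by (auto intro!: u)
    ultimately show ?thesis using f(1) unfolding PR_def prm_def kc_def by simp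
  qed
  moreover have "FO m'"
  proof -
    have "\<forall>i<n*n. m' (Suc i) = m (Suc i) \<and> m' (Suc (MM + n + i)) = m (Suc (MM + n + i))"
      using A ob mm lf j by (auto intro!: u simp: A_def)
    thus ?thesis using f(2) unfolding FO_def by simp
  qed
  moreover have "m' (B0+3) = Suc j" unfolding m'_def by simp
  moreover have "m' (B0+11) = n*n + length (fr (Suc j))" using pj unfolding m'_def L_def by (simp add: fr_Suc)
  moreover have "\<forall>i<length (fr (Suc j)). m' (Suc (n*n + i)) = 1 + 2*NN + n + kcc (fr (Suc j) ! i)"
  proof (intro allI impI)
    fix i assume "i < length (fr (Suc j))"
    hence i: "i \<le> L" using pj unfolding L_def by (simp add: fr_Suc)
    show "m' (Suc (n*n + i)) = 1 + 2*NN + n + kcc (fr (Suc j) ! i)"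
    proof (cases "i = L")
      case True
      have "m' (Suc (n*n + i)) = 1 + 2*NN + n + kcc j" using True A unfolding m'_def A_def by simp
      thus ?thesis using True pj unfolding L_def by (simp add: fr_Suc)
    next
      case False
      hence "i < L" using i by simp
      moreover have "m' (Suc (n*n + i)) = m (Suc (n*n + i))" using \<open>i < L\<close> A ob mm lf j
        by (intro u) (auto simp: A_def)
      ultimately show ?thesis using f(5) pj unfolding L_def by (simp add: fr_Suc nth_append)
    qed
  qed
  moreover have "\<forall>jj<n. rank (n+jj) < Suc j \<longrightarrow> m' (Suc (MM + jj)) = realsT ! jj"
  proof (intro allI impI)
    fix jj assume jj: "jj < n" "rank (n+jj) < Suc j"
    have "rank (n+jj) \<noteq> j"
    proof
      assume "rank (n+jj) = j"
      hence "perm j = n + jj" using perm_rank[of "n+jj"] jj by simp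
      thus False using pj by simp
    qed
    hence "rank (n+jj) < j" using jj by simp
    moreover have "m' (Suc (MM + jj)) = m (Suc (MM + jj))" using A ob mm lf j jj
      by (intro u) (auto simp: A_def)
    ultimately show "m' (Suc (MM + jj)) = realsT ! jj" using f(6) jj by simp
  qed
  ultimately show ?thesis unfolding Ir_def m'_def A_def L_def by blast
qed

lemma rB_post:
  assumes j: "j < 2*n" and I: "Ir j m" and pj: "\<not> perm j < n"
  shows "Ir (Suc j) (m(B0+2 := perm j, Suc (MM + (perm j - n)) := Suc (Suc (NN + NN + n + kcc j)) - (perm j - n),
                       B0 + 3 := Suc j))"
proof -
  define L where "L = length (fr j)"
  have f: "PR m" "FO m" "m (B0+3) = j" "m (B0+11) = n*n + L"
    "\<forall>i<L. m (Suc (n*n + i)) = 1 + 2*NN + n + kcc (fr j ! i)"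
    "\<forall>jj<n. rank (n+jj) < j \<longrightarrow> m (Suc (MM + jj)) = realsT ! jj"
    using I unfolding Ir_def L_def by auto
  have lf: "L \<le> j" unfolding L_def by (rule len_fr)
  have mm: "n*n + 2*n \<le> MM" by (rule nn2n_le_MM)
  have ob: "2 * MM + 2 < B0" by (rule out_lt)
  have pl: "perm j < 2*n" using perm_lt j .
  define jj0 where "jj0 = perm j - n"
  have jj0: "jj0 < n" "perm j = n + jj0" using pl pj unfolding jj0_def by auto
  define A where "A = Suc (MM + jj0)"
  have A: "A < B0" "A \<noteq> 0" using jj0 mm ob unfolding A_def by linarith+
  define m' where "m' = m(B0+2 := perm j, A := Suc (Suc (NN + NN + n + kcc j)) - jj0, B0 + 3 := Suc j)"
  have u: "\<And>q. q \<noteq> B0+2 \<Longrightarrow> q \<noteq> A \<Longrightarrow> q \<noteq> B0+3 \<Longrightarrow> m' q = m q"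
    unfolding m'_def by simp
  have "PR m'"
  proof -
    have "m' 0 = m 0" "m' B0 = m B0" "m' (B0+1) = m (B0+1)" "m' (B0+7) = m (B0+7)" "m' (B0+8) = m (B0+8)"
      "m' (B0+9) = m (B0+9)" "m' (B0+10) = m (B0+10)" using A by (auto intro!: u)
    moreover have "\<forall>r<2*n. m' (B0 + 20 + r) = m (B0 + 20 + r)" using A by (auto intro!: u)
    moreover have "\<forall>r<2*n. m' (B0 + 20 + 2*n + r) = m (B0 + 20 + 2*n + r)" using A by (auto intro!: u)
    ultimately show ?thesis using f(1) unfolding PR_def prm_def kc_def by simp
  qed
  moreover have "FO m'"
  proof -
    have "\<forall>i<n*n. m' (Suc i) = m (Suc i) \<and> m' (Suc (MM + n + i)) = m (Suc (MM + n + i))"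
      using A ob mm jj0 by (auto intro!: u simp: A_def)
    thus ?thesis using f(2) unfolding FO_def by simp
  qed
  moreover have "m' (B0+3) = Suc j" unfolding m'_def by simp
  moreover have "m' (B0+11) = n*n + length (fr (Suc j))" using pj f(4) A unfolding m'_def L_def by (simp add: fr_Suc)
  moreover have "\<forall>i<length (fr (Suc j)). m' (Suc (n*n + i)) = 1 + 2*NN + n + kcc (fr (Suc j) ! i)"
  proof (intro allI impI)
    fix i assume "i < length (fr (Suc j))"
    hence i: "i < L" using pj unfolding L_def by (simp add: fr_Suc)
    have "m' (Suc (n*n + i)) = m (Suc (n*n + i))" using i A ob mm lf j jj0
      by (intro u) (auto simp: A_def)
    thus "m' (Suc (n*n + i)) = 1 + 2*NN + n + kcc (fr (Suc j) ! i)" using f(5) i pj unfolding L_def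
      by (simp add: fr_Suc)
  qed
  moreover have "\<forall>jj<n. rank (n+jj) < Suc j \<longrightarrow> m' (Suc (MM + jj)) = realsT ! jj"
  proof (intro allI impI)
    fix jj assume jj: "jj < n" "rank (n+jj) < Suc j"
    show "m' (Suc (MM + jj)) = realsT ! jj"
    proof (cases "rank (n+jj) = j")
      case True
      hence "perm j = n + jj" using perm_rank[of "n+jj"] jj by simp
      hence e: "jj = jj0" using jj0 by simp
      have "realsT ! jj = 2 + 2*NN + n + kcc (rank (n+jj)) - jj" using jj unfolding realsT_def by simp
      thus ?thesis using True e A unfolding m'_def A_def by simp
    next
      case False
      hence "rank (n+jj) < j" using jj by simp
      moreover have "jj \<noteq> jj0"
      proof
        assume "jj = jj0"
        hence "rank (n + jj) = rank (perm j)" using jj0 by simp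
        thus False using False rank_perm[OF j] by simp
      qed
      hence "m' (Suc (MM + jj)) = m (Suc (MM + jj))" using A ob mm jj
        by (intro u) (auto simp: A_def)
      ultimately show ?thesis using f(6) jj by simp
    qed
  qed
  ultimately show ?thesis unfolding Ir_def m'_def A_def jj0_def by blast
qed

lemma rbody_ok:
  assumes j: "j < 2*n"
  shows "hoareT (Ir j) rbody 5 (Ir (Suc j))"
  unfolding rbody_def inc_def AB_def TB_def
  apply (rule hT_time, rule hT_pre, (rule hT_seq_bw hT_assign_wp hT_if_wp hT_skip)+)
  subgoal premises I for m
  proof -
    have f: "PR m" "FO m" "m (B0+3) = j" "m (B0+11) = n*n + length (fr j)"
      "\<forall>i<length (fr j). m (Suc (n*n + i)) = 1 + 2*NN + n + kcc (fr j ! i)"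
      "\<forall>jj<n. rank (n+jj) < j \<longrightarrow> m (Suc (MM + jj)) = realsT ! jj"
      using I unfolding Ir_def by auto
    have pr: "m 0 = B0" "m B0 = n" "m (B0+1) = K" "m (B0+7) = NN" "m (B0+8) = LL" "m (B0+9) = VV"
      "m (B0+10) = MM" "prm m" "kc m"
      using f(1) unfolding PR_def by auto
    have pj: "m (B0 + 20 + j) = perm j" using pr(8) j unfolding prm_def by simp
    have kj: "m (B0 + 20 + 2*n + j) = kcc j" using pr(9) j unfolding kc_def by simp
    have pl: "perm j < 2*n" using perm_lt j .
    have lf: "length (fr j) \<le> j" by (rule len_fr)
    have mm: "n*n + 2*n \<le> MM" by (rule nn2n_le_MM)
    have ob: "2 * MM + 2 < B0" by (rule out_lt)
    have rT: "\<And>jj. jj < n \<Longrightarrow> rank (n+jj) = j \<Longrightarrow> n + jj = perm j"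
    proof -
      fix jj assume "jj < n" "rank (n+jj) = j"
      thus "n + jj = perm j" using perm_rank[of "n+jj"] by simp
    qed
    have rTj: "perm j \<ge> n \<Longrightarrow> rank (n + (perm j - n)) = j" using rank_perm j by simp
    have vT: "perm j \<ge> n \<Longrightarrow> realsT ! (perm j - n) = 2 + 2*NN + n + kcc j - (perm j - n)"
      using rTj pl unfolding realsT_def by simp
    show ?thesis
    proof (cases "perm j < n")
      case True
      have ne: "Suc (n*n + length (fr j)) \<noteq> B0 + 11" "Suc (n*n + length (fr j)) \<noteq> B0 + 3"
        "Suc (n*n + length (fr j)) \<noteq> 0" "Suc (n*n + length (fr j)) \<noteq> B0 + 2"
        using lf mm ob j by linarith+
      show ?thesis using rA_post[OF j I True] True pr pj kj f(3) f(4) ne by simp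
    next
      case False
      have ne: "Suc (MM + (perm j - n)) \<noteq> B0 + 3" "Suc (MM + (perm j - n)) \<noteq> 0"
        "Suc (MM + (perm j - n)) \<noteq> B0 + 2"
        using pl mm ob j by linarith+
      show ?thesis using rB_post[OF j I False] False pr pj kj f(3) ne by simp
    qed
  qed
  by simp


definition RO :: "(nat \<Rightarrow> nat) \<Rightarrow> bool" where
  "RO m \<longleftrightarrow> (\<forall>i<n. m (Suc (n*n+i)) = realsD ! i) \<and> (\<forall>jj<n. m (Suc (MM+jj)) = realsT ! jj)"

lemma p8_ok: "hoareT (\<lambda>m. PR m \<and> m (B0+11) = n*n \<and> FO m) p8 (1 + (2*n * 6 + 1)) (\<lambda>m. PR m \<and> FO m \<and> RO m)"
proof -
  have loop: "hoareT (Ir 0) (While (Minus TWO (Vr 3)) rbody) (2*n * (5+1) + 1) (Ir (2*n))"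
    apply (rule hT_while[where I=Ir and T=5])
    apply (rule rbody_ok, simp)
    by (auto simp: Ir_def PR_def)
  have frn: "fr (2*n) = filter (\<lambda>r. perm r < n) [0..<2*n]" by (simp add: fr_def)
  have lfr: "length (fr (2*n)) = n" using len_realsD unfolding realsD_def frn by simp
  show ?thesis
    unfolding p8_def
    apply (rule hT_time, rule hT_seq_bw)
    apply (rule hT_post[OF loop])
    subgoal for m using lfr rank_lt unfolding Ir_def RO_def realsD_def frn[symmetric] by auto
    apply (rule hT_pre[OF hT_assign_wp])
    subgoal for m using out_lt nn2n_le_MM unfolding Ir_def PR_def FO_def prm_def kc_def by (auto simp: fr_def)
    by simp
qed

definition BO :: "(nat \<Rightarrow> nat) \<Rightarrow> bool" where
  "BO m \<longleftrightarrow> (\<forall>q<LL. m (Suc (NN + q)) = VV \<and> m (Suc (MM + NN + q)) = 2*VV - LL + 1 + q)"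

definition Ib :: "nat \<Rightarrow> (nat \<Rightarrow> nat) \<Rightarrow> bool" where
  "Ib j m \<longleftrightarrow> PR m \<and> FO m \<and> RO m \<and> m (B0+15) = j \<and>
     (\<forall>q<j. m (Suc (NN + q)) = VV \<and> m (Suc (MM + NN + q)) = 2*VV - LL + 1 + q)"

lemma n_le_NN: "n \<le> NN" by (simp add: NN_def K_def)

lemma bbody_ok:
  assumes j: "j < LL"
  shows "hoareT (Ib j) bbody 3 (Ib (Suc j))"
  unfolding bbody_def inc_def
  apply (rule hT_time, rule hT_pre, (rule hT_seq_bw hT_assign_wp)+)
  subgoal premises I for m
  proof -
    have f: "PR m" "FO m" "RO m" "m (B0+15) = j"
      "\<forall>q<j. m (Suc (NN + q)) = VV \<and> m (Suc (MM + NN + q)) = 2*VV - LL + 1 + q"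
      using I unfolding Ib_def by auto
    have pr: "m 0 = B0" "m B0 = n" "m (B0+1) = K" "m (B0+7) = NN" "m (B0+8) = LL" "m (B0+9) = VV"
      "m (B0+10) = MM" "prm m" "kc m"
      using f(1) unfolding PR_def by auto
    have mm: "MM = NN + LL" by (simp add: MM_def)
    have ob: "2 * MM + 2 < B0" by (rule out_lt)
    have nn: "NN = n*n + n" by (rule NN_eq)
    have nN: "n \<le> NN" by (rule n_le_NN)
    have vl: "LL \<le> 2*VV" by (simp add: VV_def)
    define A1 where "A1 = Suc (NN + j)"
    define A2 where "A2 = Suc (MM + NN + j)"
    define m' where "m' = m(A1 := VV, A2 := VV + VV - LL + 1 + j, B0 + 15 := Suc j)"
    have a: "A1 < B0" "A2 < B0" "A1 \<noteq> 0" "A2 \<noteq> 0" "A1 \<noteq> A2"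
      using j mm ob unfolding A1_def A2_def by linarith+
    have u: "\<And>q. q \<noteq> A1 \<Longrightarrow> q \<noteq> A2 \<Longrightarrow> q \<noteq> B0 + 15 \<Longrightarrow> m' q = m q"
      unfolding m'_def by simp
    have "PR m'"
    proof -
      have "m' 0 = m 0" "m' B0 = m B0" "m' (B0+1) = m (B0+1)" "m' (B0+7) = m (B0+7)" "m' (B0+8) = m (B0+8)"
        "m' (B0+9) = m (B0+9)" "m' (B0+10) = m (B0+10)" using a by (auto intro!: u)
      moreover have "\<forall>r<2*n. m' (B0 + 20 + r) = m (B0 + 20 + r)" using a by (auto intro!: u)
      moreover have "\<forall>r<2*n. m' (B0 + 20 + 2*n + r) = m (B0 + 20 + 2*n + r)" using a by (auto intro!: u)
      ultimately show ?thesis using f(1) unfolding PR_def prm_def kc_def by simp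
    qed
    moreover have "FO m'"
    proof -
      have "\<forall>i<n*n. m' (Suc i) = m (Suc i) \<and> m' (Suc (MM + n + i)) = m (Suc (MM + n + i))"
        using a mm nn ob j by (auto intro!: u simp: A1_def A2_def)
      thus ?thesis using f(2) unfolding FO_def by simp
    qed
    moreover have "RO m'"
    proof -
      have "\<forall>i<n. m' (Suc (n*n+i)) = m (Suc (n*n+i))" using a mm nn ob j by (auto intro!: u simp: A1_def A2_def)
      moreover have "\<forall>jj<n. m' (Suc (MM+jj)) = m (Suc (MM+jj))" using a mm nn nN ob j
        by (auto intro!: u simp: A1_def A2_def)
      ultimately show ?thesis using f(3) unfolding RO_def by simp
    qed
    moreover have "m' (B0+15) = Suc j" unfolding m'_def by simp
    moreover have "\<forall>q<Suc j. m' (Suc (NN + q)) = VV \<and> m' (Suc (MM + NN + q)) = 2*VV - LL + 1 + q"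
    proof (intro allI impI)
      fix q assume q: "q < Suc j"
      show "m' (Suc (NN + q)) = VV \<and> m' (Suc (MM + NN + q)) = 2*VV - LL + 1 + q"
      proof (cases "q = j")
        case True thus ?thesis using a vl unfolding m'_def A1_def A2_def by simp
      next
        case False
        hence "q < j" using q by simp
        moreover have "m' (Suc (NN + q)) = m (Suc (NN + q))" "m' (Suc (MM + NN + q)) = m (Suc (MM + NN + q))"
          using \<open>q < j\<close> a mm ob j by (auto intro!: u simp: A1_def A2_def)
        ultimately show ?thesis using f(5) by simp
      qed
    qed
    ultimately have "Ib (Suc j) m'" unfolding Ib_def by blast
    moreover have "A1 \<noteq> B0 + 15" "A2 \<noteq> B0 + 15" using a by linarith+
    moreover have "NN + j < B0" "MM + NN + j < B0" using a unfolding A1_def A2_def by simp_all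
    ultimately show ?thesis using pr vl f(4) unfolding m'_def A1_def A2_def by simp
  qed
  by simp

lemma p9_ok: "hoareT (\<lambda>m. PR m \<and> FO m \<and> RO m) p9 (1 + (LL * 4 + 1)) (\<lambda>m. PR m \<and> FO m \<and> RO m \<and> BO m)"
proof -
  have loop: "hoareT (Ib 0) (While (Minus (Vr 8) (Vr 15)) bbody) (LL * (3+1) + 1) (Ib LL)"
    apply (rule hT_while[where I=Ib and T=3])
    apply (rule bbody_ok, simp)
    by (auto simp: Ib_def PR_def)
  show ?thesis
    unfolding p9_def
    apply (rule hT_time, rule hT_seq_bw)
    apply (rule hT_post[OF loop])
    subgoal for m unfolding Ib_def BO_def by auto
    apply (rule hT_pre[OF hT_assign_wp])
    subgoal for m using out_lt nn2n_le_MM unfolding Ib_def PR_def FO_def RO_def prm_def kc_def by auto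
    by simp
qed

end

definition prog :: com where
  "prog = Seq init (Seq p2 (Seq p3 (Seq p4 (Seq p5 (Seq p6 (Seq p7 (Seq p8 (Seq p9 p10))))))))"

context inst begin

definition Final :: "(nat \<Rightarrow> nat) \<Rightarrow> bool" where
  "Final m \<longleftrightarrow> out_D m = Dl \<and> out_T m = Tl"

lemma len_Dl_MM: "length Dl = MM" using len_Dl by (simp add: MM_def NN_eq)
lemma len_Tl_MM: "length Tl = MM" using len_Tl by (simp add: MM_def NN_eq)

lemma final_of:
  assumes "PR m" "FO m" "RO m" "BO m"
  shows "Final (m(0 := MM))"
proof -
  define m' where "m' = m(0 := MM)"
  have m0: "m' 0 = MM" unfolding m'_def by simp
  have ms: "\<And>i. m' (Suc i) = m (Suc i)" unfolding m'_def by simp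
  have FO: "\<forall>i<n*n. m (Suc i) = Suc (fillc ! i) \<and> m (Suc (MM + n + i)) = 2 + 2 * (fillc ! i)"
    using assms(2) unfolding FO_def .
  have RO: "\<forall>i<n. m (Suc (n*n+i)) = realsD ! i" "\<forall>jj<n. m (Suc (MM+jj)) = realsT ! jj"
    using assms(3) unfolding RO_def by auto
  have BO: "\<forall>q<LL. m (Suc (NN + q)) = VV \<and> m (Suc (MM + NN + q)) = 2*VV - LL + 1 + q"
    using assms(4) unfolding BO_def .
  have nn: "NN = n*n + n" by (rule NN_eq)
  have mm: "MM = NN + LL" by (simp add: MM_def)
  have D: "out_D m' = Dl"
    unfolding out_D_def m0
  proof (rule nth_equalityI)
    show "length (map (\<lambda>i. m' (Suc i)) [0..<MM]) = length Dl" using len_Dl_MM by simp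
    fix i assume "i < length (map (\<lambda>i. m' (Suc i)) [0..<MM])"
    hence i: "i < MM" by simp
    have "m (Suc i) = Dl ! i"
    proof -
      consider (a) "i < n*n" | (b) "n*n \<le> i" "i < NN" | (c) "NN \<le> i" using nn by linarith
      thus ?thesis
      proof cases
        case a thus ?thesis using FO len_fillc unfolding Dl_def by (simp add: nth_append)
      next
        case b
        hence "m (Suc i) = realsD ! (i - n*n)" using RO(1)[rule_format, of "i - n*n"] nn by simp
        moreover have "i - n*n < n" using b nn by linarith
        ultimately show ?thesis using b len_fillc len_realsD nn unfolding Dl_def by (simp add: nth_append)
      next
        case c
        hence "m (Suc i) = VV" using BO[rule_format, of "i - NN"] i mm by simp
        moreover have "\<not> i - n*n < n" using c nn by linarith
        ultimately show ?thesis using c i len_fillc len_realsD nn mm unfolding Dl_def by (simp add: nth_append)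
      qed
    qed
    thus "map (\<lambda>i. m' (Suc i)) [0..<MM] ! i = Dl ! i" using i ms by simp
  qed
  have T: "out_T m' = Tl"
    unfolding out_T_def m0
  proof (rule nth_equalityI)
    show "length (map (\<lambda>i. m' (Suc (MM + i))) [0..<MM]) = length Tl" using len_Tl_MM by simp
    fix i assume "i < length (map (\<lambda>i. m' (Suc (MM + i))) [0..<MM])"
    hence i: "i < MM" by simp
    have lrT: "length realsT = n" by (simp add: realsT_def)
    have "m (Suc (MM + i)) = Tl ! i"
    proof -
      consider (a) "i < n" | (b) "n \<le> i" "i < NN" | (c) "NN \<le> i" using nn by linarith
      thus ?thesis
      proof cases
        case a thus ?thesis using RO(2) lrT unfolding Tl_def by (simp add: nth_append)
      next
        case b
        hence "m (Suc (MM + i)) = 2 + 2 * (fillc ! (i - n))" using FO[rule_format, of "i - n"] nn by simp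
        moreover have "i - n < n*n" using b nn by linarith
        ultimately show ?thesis using b len_fillc lrT nn unfolding Tl_def by (simp add: nth_append)
      next
        case c
        hence "m (Suc (MM + i)) = 2*VV - LL + 1 + (i - NN)" using BO[rule_format, of "i - NN"] i mm
          by (simp add: add.assoc)
        moreover have "\<not> i - n < n*n" using c nn by linarith
        ultimately show ?thesis using c i len_fillc lrT nn mm unfolding Tl_def by (simp add: nth_append)
      qed
    qed
    thus "map (\<lambda>i. m' (Suc (MM + i))) [0..<MM] ! i = Tl ! i" using i ms by simp
  qed
  show ?thesis using D T unfolding Final_def m'_def by simp
qed

lemma p10_ok: "hoareT (\<lambda>m. PR m \<and> FO m \<and> RO m \<and> BO m) p10 1 Final"
  unfolding p10_def
  apply (rule hT_pre[OF hT_assign_wp])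
  subgoal for m using final_of[of m] unfolding PR_def by simp
  done

definition Ttot :: nat where
  "Ttot = (2 + ((n+1) * 7 + 1) + 2) + (1 + ((2 + ((K+1) * 4 + 1)) + ((1 + (2*n * (2*n*6+5+1) + 1)) + ((3 + ((2*n - 1) * 6 + 1) + 1) + (4 + ((3 + (NN * 7 + 1)) + ((1 + (2*n * 6 + 1)) + ((1 + (LL * 4 + 1)) + 1))))))))"

lemma prog_ok: "hoareT (\<lambda>m. m = enc_in a t) prog Ttot Final"
proof -
  have i: "hoareT (\<lambda>m. m = enc_in a t) init (2 + ((n+1) * 7 + 1) + 2) (\<lambda>m. base m \<and> inp m)"
    by (rule hT_pre[OF init_ok]) (use enc_in_0 enc_in_inp in auto)
  have q3: "hoareT S2 p3 (2 + ((K+1) * 4 + 1)) S3"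
    by (rule hT_post[OF p3_ok]) (simp add: S3_def)
  have q4: "hoareT S3 p4 (1 + (2*n * (2*n*6+5+1) + 1)) S4"
    by (rule hT_post[OF p4_ok]) (simp add: S4_def)
  show ?thesis
    unfolding prog_def Ttot_def
    by (intro hT_seq[OF i] hT_seq[OF p2_ok] hT_seq[OF q3] hT_seq[OF q4] hT_seq[OF p5_ok]
        hT_seq[OF p6_ok] hT_seq[OF p7_ok] hT_seq[OF p8_ok] hT_seq[OF p9_ok] p10_ok)
qed


lemma Ttot_bound: "Ttot \<le> 200 * K^3"
proof -
  define y where "y = K^2"
  define x where "x = K^3"
  have k1: "1 \<le> K" by (simp add: K_def)
  have nK: "n < K" by (simp add: K_def)
  have Ky: "K \<le> y" unfolding y_def using k1 by (simp add: power2_eq_square)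
  have yx: "y \<le> x" unfolding y_def x_def using k1 by (simp add: power2_eq_square power3_eq_cube)
  have nn: "n*n \<le> y" unfolding y_def using nK by (simp add: power2_eq_square mult_le_mono)
  have NNy: "NN \<le> y" unfolding y_def NN_def K_def by (simp add: power2_eq_square)
  have Wx: "W \<le> 2*x" unfolding x_def using W_bound .
  have LL: "LL = 2*NN + 2*n + 2*W + 2" by (simp add: LL_def)
  have e4: "2 * n * (12 * n + 5 + 1) = 24*(n*n) + 12*n" by (simp add: algebra_simps)
  have e5: "(2*n - 1) * 6 \<le> 12 * n" by simp
  have e7: "(n+1) * 7 = 7 * K" by (simp add: K_def)
  have e8: "(K+1)*4 = 4*K + 4" "NN*7 = 7*NN" "LL*4 = 4*LL" "2*n*6 = 12*n" by simp_all
  have "Ttot \<le> 200 * x"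
    unfolding Ttot_def e7 e8 e4 using k1 nK Ky yx nn NNy Wx LL e5 by linarith
  thus ?thesis unfolding x_def .
qed

end

theorem theorem7:
  shows "\<exists>(prog :: com) (c :: nat) (k :: nat). \<forall>a t. in3dm_inst a t \<longrightarrow>
     (\<exists>steps m'. big_step prog (enc_in a t) steps m' \<and>
        steps \<le> c * (in3dm_size a t + 1) ^ k \<and>
        pm_inst (out_D m') (out_T m') \<and>
        (in3dm a t \<longleftrightarrow> pos_match (out_D m') (out_T m')))"
proof (rule exI[of _ prog], rule exI[of _ 200], rule exI[of _ 3], intro allI impI)
  fix a t :: "nat list"
  assume h: "in3dm_inst a t"
  hence l: "length t = length a" unfolding in3dm_inst_def by simp
  interpret I: inst a t by (unfold_locales) (rule l)
  obtain steps m' where s: "big_step prog (enc_in a t) steps m'" "steps \<le> I.Ttot" "I.Final m'"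
    using I.prog_ok unfolding hoareT_def by blast
  have "I.K \<le> in3dm_size a t + 1" unfolding I.K_def in3dm_size_def by simp
  hence "I.K ^ 3 \<le> (in3dm_size a t + 1) ^ 3" by (rule power_mono) simp
  hence "steps \<le> 200 * (in3dm_size a t + 1) ^ 3" using s(2) I.Ttot_bound by linarith
  moreover have "out_D m' = I.Dl" "out_T m' = I.Tl" using s(3) unfolding I.Final_def by auto
  hence "pm_inst (out_D m') (out_T m')" "in3dm a t \<longleftrightarrow> pos_match (out_D m') (out_T m')"
    using I.pm_inst_ok I.reduction_correct by simp_all
  ultimately show "\<exists>steps m'. big_step prog (enc_in a t) steps m' \<and> steps \<le> 200 * (in3dm_size a t + 1) ^ 3 \<and> pm_inst (out_D m') (out_T m') \<and> (in3dm a t \<longleftrightarrow> pos_match (out_D m') (out_T m'))"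
    using s(1) by blast
qed

end
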